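(* Let $E=\bigsqcup_{v\in V}\delta(v)$ be a partition of a finite set, $n=|V|$, let $M=(E,\mathcal I)$ be a matroid, and suppose each $v\in V$ has a weak ranking $\succ_v$ on $\delta(v)$. Then the popular common independent set polytope, i.e., the convex hull in $\mathbb R^E$ of the incidence vectors of all popular common independent sets, is a projection of a face of a matroid intersection polytope. Specifically, let $E'=E\cup\{e_v:v\in V\}$ with new elements $e_v$, let $P$ be the partition matroid on $E'$ with blocks $\delta(v)\cup\{e_v\}$ ($v\in V$), and let $M'$ be the matroid on $E'$ whose independent sets are those $X\subseteq E'$ with $X\cap E\in\mathcal I$ and $|X|\le n$; then there is a face of the convex hull of incidence vectors of common independent sets of $P$ and $M'$ whose image under the coordinate projection $\mathbb R^{E'}\to\mathbb R^{E}$ equals the popular common independent set polytope.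
   Context: A weak ranking is a partial order $\succ_v$ (irreflexive, transitive) such that the indifference relation $e\sim_v f$ (meaning neither $e\succ_v f$ nor $f\succ_v e$) is transitive. A common independent set is a set $I\in\mathcal I$ with $|I\cap\delta(v)|\le 1$ for all $v$. For common independent sets $I,I'$, $v$ prefers $I$ to $I'$ if either $I\cap\delta(v)\ne\emptyset=I'\cap\delta(v)$, or $I\cap\delta(v)=\{e\}$, $I'\cap\delta(v)=\{f\}$ with $e\succ_v f$; $\phi(I,I')$ is the number of such $v$; $I$ is popular if $\phi(I,I')\ge\phi(I',I)$ for all common independent sets $I'$. *)

theory Defs
  imports "HOL-Analysis.Analysis"
begin

definition matroid :: "'a set \<Rightarrow> 'a set set \<Rightarrow> bool" where
  "matroid E \<I> \<longleftrightarrow>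
     finite E \<and>
     (\<forall>I\<in>\<I>. I \<subseteq> E) \<and>
     {} \<in> \<I> \<and>
     (\<forall>I J. J \<in> \<I> \<longrightarrow> I \<subseteq> J \<longrightarrow> I \<in> \<I>) \<and>
     (\<forall>I J. I \<in> \<I> \<longrightarrow> J \<in> \<I> \<longrightarrow> card I < card J \<longrightarrow>
        (\<exists>e\<in>J - I. insert e I \<in> \<I>))"

definition is_partition :: "'a set \<Rightarrow> 'v set \<Rightarrow> ('v \<Rightarrow> 'a set) \<Rightarrow> bool" where
  "is_partition E V \<delta> \<longleftrightarrow>
     (\<forall>v\<in>V. \<delta> v \<noteq> {}) \<and>
     (\<Union>v\<in>V. \<delta> v) = E \<and>
     (\<forall>v\<in>V. \<forall>w\<in>V. v \<noteq> w \<longrightarrow> \<delta> v \<inter> \<delta> w = {})"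

definition weak_ranking :: "'a set \<Rightarrow> ('a \<Rightarrow> 'a \<Rightarrow> bool) \<Rightarrow> bool" where
  "weak_ranking S r \<longleftrightarrow>
     (\<forall>e\<in>S. \<not> r e e) \<and>
     (\<forall>e\<in>S. \<forall>f\<in>S. \<forall>g\<in>S. r e f \<longrightarrow> r f g \<longrightarrow> r e g) \<and>
     (\<forall>e\<in>S. \<forall>f\<in>S. \<forall>g\<in>S.
        (\<not> r e f \<and> \<not> r f e) \<longrightarrow> (\<not> r f g \<and> \<not> r g f) \<longrightarrow> (\<not> r e g \<and> \<not> r g e))"

definition common_indep :: "'a set set \<Rightarrow> 'v set \<Rightarrow> ('v \<Rightarrow> 'a set) \<Rightarrow> 'a set \<Rightarrow> bool" where
  "common_indep \<I> V \<delta> I \<longleftrightarrow> I \<in> \<I> \<and> (\<forall>v\<in>V. card (I \<inter> \<delta> v) \<le> 1)"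

definition prefers :: "('v \<Rightarrow> 'a set) \<Rightarrow> ('v \<Rightarrow> 'a \<Rightarrow> 'a \<Rightarrow> bool) \<Rightarrow> 'v \<Rightarrow> 'a set \<Rightarrow> 'a set \<Rightarrow> bool" where
  "prefers \<delta> pref v I I' \<longleftrightarrow>
     (I \<inter> \<delta> v \<noteq> {} \<and> I' \<inter> \<delta> v = {}) \<or>
     (\<exists>e f. I \<inter> \<delta> v = {e} \<and> I' \<inter> \<delta> v = {f} \<and> pref v e f)"

definition phi :: "'v set \<Rightarrow> ('v \<Rightarrow> 'a set) \<Rightarrow> ('v \<Rightarrow> 'a \<Rightarrow> 'a \<Rightarrow> bool) \<Rightarrow> 'a set \<Rightarrow> 'a set \<Rightarrow> nat" where
  "phi V \<delta> pref I I' = card {v\<in>V. prefers \<delta> pref v I I'}"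

definition popular :: "'a set set \<Rightarrow> 'v set \<Rightarrow> ('v \<Rightarrow> 'a set) \<Rightarrow> ('v \<Rightarrow> 'a \<Rightarrow> 'a \<Rightarrow> bool) \<Rightarrow> 'a set \<Rightarrow> bool" where
  "popular \<I> V \<delta> pref I \<longleftrightarrow>
     common_indep \<I> V \<delta> I \<and>
     (\<forall>I'. common_indep \<I> V \<delta> I' \<longrightarrow> phi V \<delta> pref I I' \<ge> phi V \<delta> pref I' I)"

definition incidence :: "'i set \<Rightarrow> real ^ ('i::finite)" where
  "incidence X = (\<chi> i. if i \<in> X then 1 else 0)"

text \<open>Extended ground set E' = E \<union> {e_v}, with E embedded via Inl and e_v = Inr v.\<close>
definition ext_ground :: "'a set \<Rightarrow> 'v set \<Rightarrow> ('a + 'v) set" where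
  "ext_ground E V = Inl ` E \<union> Inr ` V"

definition partition_indep :: "'a set \<Rightarrow> 'v set \<Rightarrow> ('v \<Rightarrow> 'a set) \<Rightarrow> ('a + 'v) set set" where
  "partition_indep E V \<delta> =
     {X. X \<subseteq> ext_ground E V \<and> (\<forall>v\<in>V. card (X \<inter> (Inl ` \<delta> v \<union> {Inr v})) \<le> 1)}"

definition ext_indep :: "'a set \<Rightarrow> 'v set \<Rightarrow> 'a set set \<Rightarrow> ('a + 'v) set set" where
  "ext_indep E V \<I> =
     {X. X \<subseteq> ext_ground E V \<and> {a. Inl a \<in> X} \<in> \<I> \<and> card X \<le> card V}"

definition proj_E :: "real ^ ('a::finite + 'v::finite) \<Rightarrow> real ^ 'a" where
  "proj_E x = (\<chi> a. x $ Inl a)"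

end

theory Submission
  imports Defs
begin

locale mat =
  fixes E :: "'a set" and Ind :: "'a set set"
  assumes M: "matroid E Ind"
begin

lemma finE: "finite E" using M unfolding matroid_def by blast
lemma indE: "I \<in> Ind \<Longrightarrow> I \<subseteq> E" using M unfolding matroid_def by blast
lemma ind_empty: "{} \<in> Ind" using M unfolding matroid_def by blast
lemma ind_sub: "J \<in> Ind \<Longrightarrow> I \<subseteq> J \<Longrightarrow> I \<in> Ind" using M unfolding matroid_def by blast
lemma ind_aug: "I \<in> Ind \<Longrightarrow> J \<in> Ind \<Longrightarrow> card I < card J \<Longrightarrow> \<exists>e\<in>J - I. insert e I \<in> Ind"
  using M unfolding matroid_def by blast
lemma ind_fin: "I \<in> Ind \<Longrightarrow> finite I" using indE finE finite_subset by blast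

definition rk :: "'a set \<Rightarrow> nat" where
  "rk X = Max (card ` {Y. Y \<subseteq> X \<and> Y \<in> Ind})"

lemma rk_fin: "finite {Y. Y \<subseteq> X \<and> Y \<in> Ind}"
proof -
  have "{Y. Y \<subseteq> X \<and> Y \<in> Ind} \<subseteq> Pow E" using indE by auto
  then show ?thesis using finE by (meson finite_Pow_iff finite_subset)
qed

lemma rk_ge: "Y \<subseteq> X \<Longrightarrow> Y \<in> Ind \<Longrightarrow> card Y \<le> rk X"
  unfolding rk_def by (rule Max_ge) (auto intro: finite_imageI rk_fin)

lemma rk_obtain: "\<exists>Y. Y \<subseteq> X \<and> Y \<in> Ind \<and> card Y = rk X"
proof -
  have "rk X \<in> card ` {Y. Y \<subseteq> X \<and> Y \<in> Ind}"
    unfolding rk_def by (rule Max_in) (use rk_fin ind_empty in auto)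
  then show ?thesis by auto
qed

lemma rk_ext: "B \<subseteq> X \<Longrightarrow> B \<in> Ind \<Longrightarrow> \<exists>Y. B \<subseteq> Y \<and> Y \<subseteq> X \<and> Y \<in> Ind \<and> card Y = rk X"
proof (induction "rk X - card B" arbitrary: B rule: less_induct)
  case less
  show ?case
  proof (cases "card B = rk X")
    case True then show ?thesis using less.prems by blast
  next
    case False
    with rk_ge[OF less.prems] have lt: "card B < rk X" by simp
    obtain Y0 where Y0: "Y0 \<subseteq> X" "Y0 \<in> Ind" "card Y0 = rk X" using rk_obtain by blast
    obtain e where e: "e \<in> Y0 - B" "insert e B \<in> Ind" using ind_aug[OF less.prems(2) Y0(2)] lt Y0(3) by auto
    have cB: "card (insert e B) = Suc (card B)" using e ind_fin[OF less.prems(2)] by auto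
    have "rk X - card (insert e B) < rk X - card B" using cB lt by simp
    from less.hyps[OF this] obtain Y where "insert e B \<subseteq> Y" "Y \<subseteq> X" "Y \<in> Ind" "card Y = rk X"
      using e Y0 less.prems by blast
    then show ?thesis by blast
  qed
qed

lemma rk_mono: "X \<subseteq> Y \<Longrightarrow> rk X \<le> rk Y"
proof -
  assume XY: "X \<subseteq> Y"
  obtain Z where Z: "Z \<subseteq> X" "Z \<in> Ind" "card Z = rk X" using rk_obtain by blast
  have "Z \<subseteq> Y" using Z XY by blast
  from rk_ge[OF this Z(2)] Z(3) show ?thesis by simp
qed

lemma rk_ind: "I \<in> Ind \<Longrightarrow> rk I = card I"
proof -
  assume I: "I \<in> Ind"
  obtain Y where "Y \<subseteq> I" "Y \<in> Ind" "card Y = rk I" using rk_obtain by blast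
  then have "rk I \<le> card I" using ind_fin[OF I] by (metis card_mono)
  moreover have "card I \<le> rk I" using rk_ge[OF _ I] by simp
  ultimately show ?thesis by simp
qed

lemma rk_insert: "rk (insert e X) \<le> Suc (rk X)"
proof -
  obtain Y where Y: "Y \<subseteq> insert e X" "Y \<in> Ind" "card Y = rk (insert e X)" using rk_obtain by blast
  have "Y - {e} \<subseteq> X" "Y - {e} \<in> Ind" using Y ind_sub by auto
  then have "card (Y - {e}) \<le> rk X" by (rule rk_ge)
  moreover have "card Y \<le> Suc (card (Y - {e}))"
  proof (cases "e \<in> Y")
    case True then show ?thesis using ind_fin[OF Y(2)] card_Suc_Diff1 by fastforce
  next
    case False then show ?thesis by simp
  qed
  ultimately show ?thesis using Y by simp
qed

lemma rk_submod: "rk (X \<union> Y) + rk (X \<inter> Y) \<le> rk X + rk Y"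
proof -
  obtain B where B: "B \<subseteq> X \<inter> Y" "B \<in> Ind" "card B = rk (X \<inter> Y)" using rk_obtain by blast
  obtain Z where Z: "B \<subseteq> Z" "Z \<subseteq> X \<union> Y" "Z \<in> Ind" "card Z = rk (X \<union> Y)"
    using rk_ext[of B "X \<union> Y"] B by blast
  have fZ: "finite Z" using ind_fin Z by blast
  have "card (Z \<inter> X) \<le> rk X" by (rule rk_ge) (use Z ind_sub in auto)
  moreover have "card (Z \<inter> Y) \<le> rk Y" by (rule rk_ge) (use Z ind_sub in auto)
  moreover have "card (Z \<inter> X) + card (Z \<inter> Y) = card (Z \<inter> X \<union> Z \<inter> Y) + card (Z \<inter> X \<inter> (Z \<inter> Y))"
    by (rule card_Un_Int) (use fZ in auto)
  moreover have "Z \<inter> X \<union> Z \<inter> Y = Z" using Z by auto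
  moreover have "card B \<le> card (Z \<inter> X \<inter> (Z \<inter> Y))" by (rule card_mono) (use fZ B Z in auto)
  ultimately have "card Z + card B \<le> rk X + rk Y" by simp
  then show ?thesis using B Z by simp
qed

definition cl :: "'a set \<Rightarrow> 'a set" where "cl X = {e \<in> E. rk (insert e X) = rk X}"

lemma cl_E: "cl X \<subseteq> E" unfolding cl_def by auto
lemma cl_sub: "X \<inter> E \<subseteq> cl X" unfolding cl_def by (auto simp: insert_absorb)

lemma ind_insert_iff: "I \<in> Ind \<Longrightarrow> e \<in> E \<Longrightarrow> e \<notin> I \<Longrightarrow> insert e I \<in> Ind \<longleftrightarrow> e \<notin> cl I"
proof -
  assume I: "I \<in> Ind" and eE: "e \<in> E" and eI: "e \<notin> I"
  have fI: "finite I" using ind_fin I by blast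
  show ?thesis
  proof
    assume "insert e I \<in> Ind"
    then have "rk (insert e I) = Suc (card I)" using rk_ind fI eI by simp
    then show "e \<notin> cl I" unfolding cl_def using rk_ind[OF I] by simp
  next
    assume "e \<notin> cl I"
    then have "rk (insert e I) \<noteq> rk I" unfolding cl_def using eE by simp
    moreover have "rk I \<le> rk (insert e I)" by (rule rk_mono) auto
    ultimately have r: "rk (insert e I) = Suc (card I)" using rk_insert[of e I] rk_ind[OF I] by simp
    obtain Y where Y: "Y \<subseteq> insert e I" "Y \<in> Ind" "card Y = rk (insert e I)" using rk_obtain by blast
    have "Y = insert e I" by (rule card_subset_eq) (use Y r fI eI in auto)
    then show "insert e I \<in> Ind" using Y by simp
  qed
qed

lemma cl_mono: "X \<subseteq> Y \<Longrightarrow> cl X \<subseteq> cl Y"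
proof
  fix e assume XY: "X \<subseteq> Y" and e: "e \<in> cl X"
  then have eE: "e \<in> E" and r: "rk (insert e X) = rk X" unfolding cl_def by auto
  show "e \<in> cl Y"
  proof (cases "e \<in> Y")
    case True then show ?thesis using eE unfolding cl_def by (simp add: insert_absorb)
  next
    case False
    have "rk (insert e X \<union> Y) + rk (insert e X \<inter> Y) \<le> rk (insert e X) + rk Y" by (rule rk_submod)
    moreover have "insert e X \<union> Y = insert e Y" using XY by auto
    moreover have "insert e X \<inter> Y = X" using XY False by auto
    ultimately have "rk (insert e Y) \<le> rk Y" using r by simp
    moreover have "rk Y \<le> rk (insert e Y)" by (rule rk_mono) auto
    ultimately show ?thesis using eE unfolding cl_def by simp
  qed
qed

lemma rk_Un_cl: "A \<subseteq> cl B \<Longrightarrow> rk (B \<union> A) = rk B"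
proof -
  assume A: "A \<subseteq> cl B"
  obtain Y where Y: "Y \<subseteq> B" "Y \<in> Ind" "card Y = rk B" using rk_obtain by blast
  obtain Z where Z: "Y \<subseteq> Z" "Z \<subseteq> B \<union> A" "Z \<in> Ind" "card Z = rk (B \<union> A)"
    using rk_ext[of Y "B \<union> A"] Y by blast
  have fZ: "finite Z" using ind_fin Z by blast
  have "card (Z \<inter> B) \<le> rk B" by (rule rk_ge) (use Z ind_sub in auto)
  moreover have "Y \<subseteq> Z \<inter> B" using Y Z by blast
  moreover have "finite (Z \<inter> B)" using fZ by blast
  ultimately have ZB: "Z \<inter> B = Y"
    using Y card_seteq by (metis order_antisym)
  have "Z = Y"
  proof (rule ccontr)
    assume "Z \<noteq> Y"
    then obtain e where e: "e \<in> Z" "e \<notin> Y" using Z by blast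
    then have eB: "e \<notin> B" using ZB by blast
    then have eA: "e \<in> A" using e Z by blast
    have "insert e Y \<in> Ind" using ind_sub[OF Z(3)] e Z by auto
    then have "card (insert e Y) \<le> rk (insert e B)" by (intro rk_ge) (use Y in auto)
    moreover have "card (insert e Y) = Suc (rk B)" using Y e ind_fin by auto
    moreover have "rk (insert e B) = rk B" using A eA unfolding cl_def by auto
    ultimately show False by simp
  qed
  then show ?thesis using Y Z by simp
qed

lemma cl_cl: "A \<subseteq> cl B \<Longrightarrow> cl A \<subseteq> cl B"
proof
  fix e assume A: "A \<subseteq> cl B" and e: "e \<in> cl A"
  have "e \<in> cl (B \<union> A)" using cl_mono[of A "B \<union> A"] e by auto
  then have "rk (insert e (B \<union> A)) = rk B" using rk_Un_cl[OF A] unfolding cl_def by auto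
  moreover have "rk (insert e B) \<le> rk (insert e (B \<union> A))" by (rule rk_mono) auto
  moreover have "rk B \<le> rk (insert e B)" by (rule rk_mono) auto
  ultimately show "e \<in> cl B" using e cl_E unfolding cl_def by auto
qed

lemma rk_cl_le: "K \<subseteq> cl X \<Longrightarrow> K \<in> Ind \<Longrightarrow> card K \<le> rk X"
  using rk_ge[of K "X \<union> cl X"] rk_Un_cl[of "cl X" X] by auto

lemma steinitz:
  assumes "e \<in> E" "f \<in> E" "e \<in> cl (insert f A)" "e \<notin> cl A"
  shows "f \<in> cl (insert e A)"
proof (rule ccontr)
  assume nf: "f \<notin> cl (insert e A)"
  have r1: "rk (insert e (insert f A)) = rk (insert f A)" using assms(3) unfolding cl_def by auto
  have "rk (insert e A) \<noteq> rk A" using assms(1,4) unfolding cl_def by auto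
  moreover have "rk A \<le> rk (insert e A)" by (rule rk_mono) auto
  ultimately have r2: "rk (insert e A) = Suc (rk A)" using rk_insert[of e A] by simp
  have "rk (insert f (insert e A)) \<noteq> rk (insert e A)" using nf assms(2) unfolding cl_def by auto
  moreover have "rk (insert e A) \<le> rk (insert f (insert e A))" by (rule rk_mono) auto
  ultimately have r3: "rk (insert f (insert e A)) = Suc (rk (insert e A))" using rk_insert[of f "insert e A"] by simp
  have "insert f (insert e A) = insert e (insert f A)" by auto
  then show False using r1 r2 r3 rk_insert[of f A] by simp
qed

lemma cl_Int:
  assumes I: "I \<in> Ind" and AB: "A \<subseteq> I" "B \<subseteq> I"
  shows "cl A \<inter> cl B \<subseteq> cl (A \<inter> B)"
proof
  fix e assume e: "e \<in> cl A \<inter> cl B"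
  then have eE: "e \<in> E" using cl_E by auto
  have iA: "A \<in> Ind" "B \<in> Ind" "A \<inter> B \<in> Ind" "A \<union> B \<in> Ind" using ind_sub[OF I] AB by (auto, meson inf.coboundedI1)
  have fin: "finite A" "finite B" using iA ind_fin by auto
  show "e \<in> cl (A \<inter> B)"
  proof (cases "e \<in> I")
    case True
    have "e \<in> A"
    proof (rule ccontr)
      assume "e \<notin> A"
      then have "insert e A \<in> Ind" using ind_sub[OF I] True AB by auto
      then show False using ind_insert_iff[OF iA(1) eE \<open>e \<notin> A\<close>] e by auto
    qed
    moreover have "e \<in> B"
    proof (rule ccontr)
      assume "e \<notin> B"
      then have "insert e B \<in> Ind" using ind_sub[OF I] True AB by auto
      then show False using ind_insert_iff[OF iA(2) eE \<open>e \<notin> B\<close>] e by auto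
    qed
    ultimately show ?thesis using cl_sub[of "A \<inter> B"] eE by auto
  next
    case False
    show ?thesis
    proof (rule ccontr)
      assume ne: "e \<notin> cl (A \<inter> B)"
      have "insert e (A \<inter> B) \<in> Ind" using ind_insert_iff[OF iA(3) eE] ne False AB by auto
      then have c1: "rk (insert e (A \<inter> B)) = Suc (card (A \<inter> B))"
      proof -
        assume "insert e (A \<inter> B) \<in> Ind"
        then have "rk (insert e (A \<inter> B)) = card (insert e (A \<inter> B))" by (rule rk_ind)
        moreover have "e \<notin> A \<inter> B" using False AB by blast
        ultimately show ?thesis using fin by simp
      qed
      have "rk (insert e A \<union> insert e B) + rk (insert e A \<inter> insert e B) \<le> rk (insert e A) + rk (insert e B)"
        by (rule rk_submod)
      moreover have "rk (insert e A) = card A" using e rk_ind[OF iA(1)] unfolding cl_def by auto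
      moreover have "rk (insert e B) = card B" using e rk_ind[OF iA(2)] unfolding cl_def by auto
      moreover have "insert e A \<inter> insert e B = insert e (A \<inter> B)" by auto
      moreover have "card (A \<union> B) \<le> rk (insert e A \<union> insert e B)" by (rule rk_ge) (use iA in auto)
      moreover have "card (A \<union> B) + card (A \<inter> B) = card A + card B" using card_Un_Int fin by metis
      ultimately show False using c1 by simp
    qed
  qed
qed

lemma kick:
  assumes I: "I \<in> Ind" and e: "e \<in> cl I" "e \<notin> I"
  shows "e \<in> cl {x \<in> I. insert e (I - {x}) \<in> Ind}"
proof -
  let ?K = "{x \<in> I. insert e (I - {x}) \<notin> Ind}"
  have eE: "e \<in> E" using e cl_E by auto
  have fK: "finite ?K" using ind_fin[OF I] by auto
  have "\<forall>K'. K' \<subseteq> ?K \<longrightarrow> e \<in> cl (I - K')"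
  proof (intro allI impI)
    fix K' assume K': "K' \<subseteq> ?K"
    have "finite K'" using finite_subset[OF K' fK] .
    then show "e \<in> cl (I - K')" using K'
    proof (induction K' rule: finite_induct)
      case empty then show ?case using e by simp
    next
      case (insert x F)
      then have IH: "e \<in> cl (I - F)" by auto
      have x: "x \<in> I" "insert e (I - {x}) \<notin> Ind" using insert by auto
      have "I - {x} \<in> Ind" using ind_sub I by auto
      then have "e \<in> cl (I - {x})" using ind_insert_iff[of "I - {x}" e] x eE e by auto
      then have "e \<in> cl ((I - F) \<inter> (I - {x}))" using cl_Int[OF I, of "I - F" "I - {x}"] IH by auto
      moreover have "(I - F) \<inter> (I - {x}) = I - insert x F" by auto
      ultimately show ?case by simp
    qed
  qed
  then have "e \<in> cl (I - ?K)" by blast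
  moreover have "I - ?K = {x \<in> I. insert e (I - {x}) \<in> Ind}" by auto
  ultimately show ?thesis by simp
qed

lemma ind_not_cl: "insert e J \<in> Ind \<Longrightarrow> e \<notin> J \<Longrightarrow> e \<notin> cl J"
  using ind_insert_iff[of J e] ind_sub indE by auto

lemma dep_cl: "J \<in> Ind \<Longrightarrow> e \<in> E \<Longrightarrow> e \<notin> J \<Longrightarrow> insert e J \<notin> Ind \<Longrightarrow> e \<in> cl J"
  using ind_insert_iff by blast

end

context mat begin

lemma UM:
  fixes k :: nat
  assumes "I \<in> Ind" "inj_on x {..<k}" "inj_on y {..<k}" "x ` {..<k} \<subseteq> I" "y ` {..<k} \<inter> I = {}"
    "y ` {..<k} \<subseteq> E"
    "\<forall>i<k. insert (y i) (I - {x i}) \<in> Ind"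
    "\<forall>i j. i < j \<longrightarrow> j < k \<longrightarrow> insert (y i) (I - {x j}) \<notin> Ind"
  shows "(I - x ` {..<k}) \<union> y ` {..<k} \<in> Ind"
  using assms
proof (induction k arbitrary: I)
  case 0 thus ?case by simp
next
  case (Suc k)
  define I1 where "I1 = insert (y k) (I - {x k})"
  have I: "I \<in> Ind" using Suc.prems(1) .
  have I1: "I1 \<in> Ind" using Suc.prems(7) unfolding I1_def by auto
  have inj: "inj_on x {..<k}" "inj_on y {..<k}" using Suc.prems(2,3) by (auto intro: inj_on_subset)
  have xI: "\<And>i. i < Suc k \<Longrightarrow> x i \<in> I" using Suc.prems(4) by auto
  have yI: "\<And>i. i < Suc k \<Longrightarrow> y i \<notin> I" using Suc.prems(5) by auto
  have yE: "\<And>i. i < Suc k \<Longrightarrow> y i \<in> E" using Suc.prems(6) by auto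
  have xne: "\<And>i j. i < Suc k \<Longrightarrow> j < Suc k \<Longrightarrow> i \<noteq> j \<Longrightarrow> x i \<noteq> x j"
    using Suc.prems(2) by (meson inj_onD lessThan_iff)
  have yne: "\<And>i j. i < Suc k \<Longrightarrow> j < Suc k \<Longrightarrow> i \<noteq> j \<Longrightarrow> y i \<noteq> y j"
    using Suc.prems(3) by (meson inj_onD lessThan_iff)
  have xk: "x ` {..<k} \<subseteq> I1" unfolding I1_def using xI xne by force
  have yk: "y ` {..<k} \<inter> I1 = {}" unfolding I1_def using yI yne by force
  have yE': "y ` {..<k} \<subseteq> E" using yE by force
  have c7: "\<forall>i<k. insert (y i) (I1 - {x i}) \<in> Ind"
  proof (intro allI impI)
    fix i assume i: "i < k"
    let ?A = "I - {x k} - {x i}"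
    have G1: "insert (y i) (I - {x i}) \<in> Ind" using Suc.prems(7) i by auto
    have G2: "insert (y i) (I - {x k}) \<notin> Ind" using Suc.prems(8) i by auto
    have G3: "insert (y k) (I - {x k}) \<in> Ind" using Suc.prems(7) by auto
    have yiI: "y i \<notin> I" "y k \<notin> I" using yI i by auto
    have yik: "y i \<noteq> y k" using yne i by auto
    have yiE: "y i \<in> E" "y k \<in> E" using yE i by auto
    have eq: "I1 - {x i} = insert (y k) ?A" unfolding I1_def using xI i yiI by auto
    show "insert (y i) (I1 - {x i}) \<in> Ind"
    proof (rule ccontr)
      assume dep: "insert (y i) (I1 - {x i}) \<notin> Ind"
      have iA: "insert (y k) ?A \<in> Ind" by (rule ind_sub[OF G3]) auto
      have yinA: "y i \<notin> insert (y k) ?A" using yiI yik by auto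
      have c1: "y i \<in> cl (insert (y k) ?A)" using dep_cl[OF iA yiE(1) yinA] dep eq by simp
      have "insert (y i) ?A \<in> Ind" by (rule ind_sub[OF G1]) auto
      then have c2: "y i \<notin> cl ?A" using ind_not_cl yiI by auto
      have c3: "y k \<in> cl (insert (y i) ?A)" using steinitz[OF yiE(1) yiE(2) c1 c2] .
      have IxkI: "I - {x k} \<in> Ind" using ind_sub[OF I] by auto
      have c4: "y i \<in> cl (I - {x k})" using dep_cl[OF IxkI yiE(1)] G2 yiI by auto
      have "?A \<subseteq> cl (I - {x k})" using cl_sub[of "I - {x k}"] indE[OF I] by auto
      then have "insert (y i) ?A \<subseteq> cl (I - {x k})" using c4 by auto
      then have "cl (insert (y i) ?A) \<subseteq> cl (I - {x k})" by (rule cl_cl)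
      then have "y k \<in> cl (I - {x k})" using c3 by auto
      then show False using ind_not_cl[OF G3] yiI by auto
    qed
  qed
  have c8: "\<forall>i j. i < j \<longrightarrow> j < k \<longrightarrow> insert (y i) (I1 - {x j}) \<notin> Ind"
  proof (intro allI impI notI)
    fix i j assume ij: "i < j" "j < k" and ind: "insert (y i) (I1 - {x j}) \<in> Ind"
    have yiI: "y i \<notin> I" using yI ij by auto
    have yiE: "y i \<in> E" using yE ij by auto
    have I1': "I - {x j} \<in> Ind" "I - {x k} \<in> Ind" using ind_sub[OF I] by auto
    have "y i \<in> cl (I - {x j})" using dep_cl[OF I1'(1) yiE] Suc.prems(8) ij yiI by auto
    moreover have "y i \<in> cl (I - {x k})" using dep_cl[OF I1'(2) yiE] Suc.prems(8) ij yiI by auto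
    ultimately have "y i \<in> cl ((I - {x j}) \<inter> (I - {x k}))" using cl_Int[OF I, of "I - {x j}" "I - {x k}"] by auto
    moreover have "(I - {x j}) \<inter> (I - {x k}) \<subseteq> I1 - {x j}" unfolding I1_def by auto
    ultimately have "y i \<in> cl (I1 - {x j})" using cl_mono by blast
    moreover have "y i \<notin> I1 - {x j}" unfolding I1_def using yiI yne ij by auto
    ultimately show False using ind_not_cl[OF ind] by auto
  qed
  have "(I1 - x ` {..<k}) \<union> y ` {..<k} \<in> Ind" by (rule Suc.IH[OF I1 inj xk yk yE' c7 c8])
  moreover have "y k \<notin> x ` {..<k}" using xI yI by force
  then have "(I1 - x ` {..<k}) \<union> y ` {..<k} = (I - x ` {..<Suc k}) \<union> y ` {..<Suc k}"
    unfolding I1_def lessThan_Suc by auto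
  ultimately show ?case by simp
qed

lemma UM_free:
  fixes k :: nat
  assumes "I \<in> Ind" "inj_on x {..<k}" "inj_on y {..<k}" "x ` {..<k} \<subseteq> I" "y ` {..<k} \<inter> I = {}"
    "y ` {..<k} \<subseteq> E"
    "\<forall>i<k. insert (y i) (I - {x i}) \<in> Ind"
    "\<forall>i j. i < j \<longrightarrow> j < k \<longrightarrow> insert (y i) (I - {x j}) \<notin> Ind"
    "z \<notin> I" "insert z I \<in> Ind" "z \<notin> y ` {..<k}" "\<forall>i<k. insert (y i) I \<notin> Ind"
  shows "insert z ((I - x ` {..<k}) \<union> y ` {..<k}) \<in> Ind"
proof -
  let ?I = "insert z I"
  have zE: "z \<in> E" using indE assms(10) by auto
  have zcl: "z \<notin> cl I" using ind_not_cl assms(9,10) by auto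
  have c7: "\<forall>i<k. insert (y i) (?I - {x i}) \<in> Ind"
  proof (intro allI impI)
    fix i assume i: "i < k"
    let ?A = "insert (y i) (I - {x i})"
    have A: "?A \<in> Ind" using assms(7) i by auto
    have yiE: "y i \<in> E" using assms(6) i by auto
    have yiI: "y i \<notin> I" using assms(5) i by auto
    have "y i \<in> cl I" using dep_cl[OF assms(1) yiE yiI] assms(12) i by auto
    moreover have "I - {x i} \<subseteq> cl I" using cl_sub[of I] indE[OF assms(1)] by auto
    ultimately have "?A \<subseteq> cl I" by auto
    then have "cl ?A \<subseteq> cl I" by (rule cl_cl)
    then have "z \<notin> cl ?A" using zcl by auto
    moreover have "z \<notin> ?A" using assms(9,11) i by auto
    ultimately have "insert z ?A \<in> Ind" using ind_insert_iff[OF A zE] by auto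
    moreover have "insert z ?A = insert (y i) (?I - {x i})" using assms(4,9) i by auto
    ultimately show "insert (y i) (?I - {x i}) \<in> Ind" by simp
  qed
  have c8: "\<forall>i j. i < j \<longrightarrow> j < k \<longrightarrow> insert (y i) (?I - {x j}) \<notin> Ind"
  proof (intro allI impI notI)
    fix i j assume ij: "i < j" "j < k" and ind: "insert (y i) (?I - {x j}) \<in> Ind"
    have ik: "i < k" using ij by simp
    have yiE: "y i \<in> E" using assms(6) ik by auto
    have yiI: "y i \<notin> I" using assms(5) ik by auto
    have "I - {x j} \<in> Ind" using ind_sub[OF assms(1)] by auto
    then have "y i \<in> cl (I - {x j})" using dep_cl[OF _ yiE] assms(8) ij yiI by auto
    then have "y i \<in> cl (?I - {x j})" using cl_mono[of "I - {x j}" "?I - {x j}"] by auto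
    moreover have "y i \<notin> ?I - {x j}" using yiI assms(11) ij by auto
    ultimately show False using ind_not_cl[OF ind] by auto
  qed
  have "y ` {..<k} \<inter> ?I = {}" using assms(5,11) by auto
  moreover have "x ` {..<k} \<subseteq> ?I" using assms(4) by auto
  ultimately have "(?I - x ` {..<k}) \<union> y ` {..<k} \<in> Ind"
    using UM[OF assms(10) assms(2,3) _ _ assms(6) c7 c8] by blast
  moreover have "z \<notin> x ` {..<k}" using assms(4,9) by auto
  then have "(?I - x ` {..<k}) \<union> y ` {..<k} = insert z ((I - x ` {..<k}) \<union> y ` {..<k})" by auto
  ultimately show ?thesis by simp
qed

end

locale popl = mat E Ind for E :: "'a set" and Ind +
  fixes V :: "'v set" and \<delta> :: "'v \<Rightarrow> 'a set" and pref :: "'v \<Rightarrow> 'a \<Rightarrow> 'a \<Rightarrow> bool"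
  assumes part: "is_partition E V \<delta>" and wr: "\<forall>v\<in>V. weak_ranking (\<delta> v) (pref v)" and finV: "finite V"
begin

lemma card1_single: "finite A \<Longrightarrow> card A \<le> 1 \<Longrightarrow> x \<in> A \<Longrightarrow> A = {x}"
  by (metis One_nat_def card_le_Suc0_iff_eq empty_iff insert_iff subsetI subset_antisym)

lemma dE: "v \<in> V \<Longrightarrow> \<delta> v \<subseteq> E" using part unfolding is_partition_def by blast
lemma disj: "v \<in> V \<Longrightarrow> w \<in> V \<Longrightarrow> e \<in> \<delta> v \<Longrightarrow> e \<in> \<delta> w \<Longrightarrow> v = w"
  using part unfolding is_partition_def by blast
lemma owner: "e \<in> E \<Longrightarrow> \<exists>v\<in>V. e \<in> \<delta> v" using part unfolding is_partition_def by blast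
lemma dne: "v \<in> V \<Longrightarrow> \<delta> v \<noteq> {}" using part unfolding is_partition_def by blast
lemma irr: "v \<in> V \<Longrightarrow> e \<in> \<delta> v \<Longrightarrow> \<not> pref v e e" using wr unfolding weak_ranking_def by blast
lemma ptrans: "v \<in> V \<Longrightarrow> e \<in> \<delta> v \<Longrightarrow> f \<in> \<delta> v \<Longrightarrow> g \<in> \<delta> v \<Longrightarrow> pref v e f \<Longrightarrow> pref v f g \<Longrightarrow> pref v e g"
  using wr unfolding weak_ranking_def by blast
lemma pind: "v \<in> V \<Longrightarrow> e \<in> \<delta> v \<Longrightarrow> f \<in> \<delta> v \<Longrightarrow> g \<in> \<delta> v \<Longrightarrow> \<not> pref v e f \<Longrightarrow> \<not> pref v f e
   \<Longrightarrow> \<not> pref v f g \<Longrightarrow> \<not> pref v g f \<Longrightarrow> \<not> pref v e g \<and> \<not> pref v g e"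
  using wr unfolding weak_ranking_def by blast
lemma fin_d: "finite (\<delta> v)" if "v \<in> V" using dE[OF that] finE finite_subset by blast

definition nl :: "'a \<Rightarrow> bool" where "nl e \<longleftrightarrow> e \<in> E \<and> {e} \<in> Ind"
lemma nl_ind: "J \<in> Ind \<Longrightarrow> e \<in> J \<Longrightarrow> nl e" unfolding nl_def using indE ind_sub by blast
lemma nl_cl: "nl e \<Longrightarrow> e \<notin> cl {}" unfolding nl_def using ind_not_cl by fastforce

definition tp :: "'v \<Rightarrow> 'a set" where "tp v = {e \<in> \<delta> v. nl e \<and> (\<forall>g\<in>\<delta> v. nl g \<longrightarrow> \<not> pref v g e)}"

lemma tp_sub: "tp v \<subseteq> \<delta> v" unfolding tp_def by auto
lemma tp_nl: "e \<in> tp v \<Longrightarrow> nl e" unfolding tp_def by auto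
lemma tp_nopref: "g \<in> tp v \<Longrightarrow> x \<in> \<delta> v \<Longrightarrow> nl x \<Longrightarrow> \<not> pref v x g" unfolding tp_def by auto

lemma tp_dom:
  assumes v: "v \<in> V" and g: "g \<in> tp v" and x: "x \<in> \<delta> v" "nl x" "x \<notin> tp v"
  shows "pref v g x"
proof (rule ccontr)
  assume ng: "\<not> pref v g x"
  have gd: "g \<in> \<delta> v" "nl g" using g unfolding tp_def by auto
  obtain h where h: "h \<in> \<delta> v" "nl h" "pref v h x" using x unfolding tp_def by auto
  have nxg: "\<not> pref v x g" using tp_nopref[OF g x(1,2)] .
  have nhg: "\<not> pref v h g" using tp_nopref[OF g h(1,2)] .
  have ngh: "\<not> pref v g h"
  proof
    assume "pref v g h"
    then have "pref v g x" using ptrans[OF v gd(1) h(1) x(1)] h(3) by blast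
    then show False using ng by simp
  qed
  have "\<not> pref v x h \<and> \<not> pref v h x" using pind[OF v x(1) gd(1) h(1)] ng nxg nhg ngh by blast
  then show False using h(3) by simp
qed

lemma tp_ne:
  assumes v: "v \<in> V" and x: "x \<in> \<delta> v" "nl x"
  shows "tp v \<noteq> {}"
proof -
  let ?N = "\<lambda>z. card {g \<in> \<delta> v. nl g \<and> pref v g z}"
  let ?P = "\<lambda>z. z \<in> \<delta> v \<and> nl z"
  obtain z where z: "?P z" "\<forall>y. ?P y \<longrightarrow> ?N z \<le> ?N y" using ex_has_least_nat[of ?P x ?N] x by blast
  have "z \<in> tp v"
  proof (rule ccontr)
    assume "z \<notin> tp v"
    then obtain h where h: "h \<in> \<delta> v" "nl h" "pref v h z" using z unfolding tp_def by auto
    have sub: "{g \<in> \<delta> v. nl g \<and> pref v g h} \<subseteq> {g \<in> \<delta> v. nl g \<and> pref v g z}"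
      using ptrans[OF v _ h(1) z(1)[THEN conjunct1]] h(3) by blast
    have "h \<in> {g \<in> \<delta> v. nl g \<and> pref v g z}" using h by auto
    moreover have "h \<notin> {g \<in> \<delta> v. nl g \<and> pref v g h}" using irr[OF v h(1)] by auto
    ultimately have "{g \<in> \<delta> v. nl g \<and> pref v g h} \<subset> {g \<in> \<delta> v. nl g \<and> pref v g z}" using sub by blast
    then have "?N h < ?N z" by (rule psubset_card_mono[rotated]) (use fin_d[OF v] in auto)
    then show False using z(2) h by force
  qed
  then show ?thesis by blast
qed

definition cis :: "'a set \<Rightarrow> bool" where "cis J \<longleftrightarrow> J \<in> Ind \<and> (\<forall>v\<in>V. card (J \<inter> \<delta> v) \<le> 1)"
lemma cis_eq: "common_indep Ind V \<delta> J = cis J" unfolding common_indep_def cis_def by simp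

definition elt :: "'a set \<Rightarrow> 'v \<Rightarrow> 'a" where "elt J v = (SOME x. x \<in> J \<inter> \<delta> v)"
lemma elt: "J \<inter> \<delta> v \<noteq> {} \<Longrightarrow> elt J v \<in> J \<inter> \<delta> v" unfolding elt_def by (rule someI_ex) blast

lemma cis_single: assumes "cis J" "v \<in> V" "x \<in> J \<inter> \<delta> v" shows "J \<inter> \<delta> v = {x}"
proof -
  have "finite (J \<inter> \<delta> v)" using fin_d[OF assms(2)] by blast
  moreover have "card (J \<inter> \<delta> v) \<le> 1" using assms unfolding cis_def by auto
  ultimately show ?thesis using assms(3) by (rule card1_single)
qed

lemma elt_uniq: assumes "cis J" "v \<in> V" "x \<in> J \<inter> \<delta> v" shows "elt J v = x"
proof -
  have "J \<inter> \<delta> v = {x}" by (rule cis_single[OF assms])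
  moreover have "elt J v \<in> J \<inter> \<delta> v" by (rule elt) (use assms(3) in blast)
  ultimately show ?thesis by simp
qed

lemma cis_ind: "cis J \<Longrightarrow> J \<in> Ind" unfolding cis_def by simp

definition Sx :: "'a set \<Rightarrow> 'v set" where "Sx J = {v \<in> V. J \<inter> \<delta> v \<inter> tp v = {}}"
definition bet :: "'a set \<Rightarrow> 'v \<Rightarrow> 'a set" where "bet J v = {e \<in> \<delta> v. nl e \<and> (\<forall>x \<in> J \<inter> \<delta> v. pref v e x)}"
definition mv :: "'a set \<Rightarrow> 'v \<Rightarrow> 'a set" where "mv J v = (if v \<in> Sx J then bet J v else tp v - J)"

lemma mv_sub: "mv J v \<subseteq> \<delta> v" unfolding mv_def bet_def using tp_sub by auto
lemma mv_nl: "e \<in> mv J v \<Longrightarrow> nl e" unfolding mv_def bet_def using tp_nl by (auto split: if_splits)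
lemma mv_E: "v \<in> V \<Longrightarrow> mv J v \<subseteq> E" using mv_sub dE by blast
lemma mv_disj: assumes v: "v \<in> V" shows "mv J v \<inter> J = {}"
proof (rule ccontr)
  assume "mv J v \<inter> J \<noteq> {}"
  then obtain e where e: "e \<in> mv J v" "e \<in> J" by blast
  show False
  proof (cases "v \<in> Sx J")
    case True
    then have "e \<in> bet J v" using e unfolding mv_def by simp
    then have "e \<in> \<delta> v" "pref v e e" using e(2) unfolding bet_def by auto
    then show False using irr[OF v] by blast
  next
    case False
    then show False using e unfolding mv_def by simp
  qed
qed

lemma tp_bet: assumes "cis J" "v \<in> Sx J" shows "tp v \<subseteq> bet J v"
proof
  fix g assume g: "g \<in> tp v"
  have v: "v \<in> V" using assms unfolding Sx_def by auto
  have "\<forall>x\<in>J \<inter> \<delta> v. pref v g x"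
  proof
    fix x assume x: "x \<in> J \<inter> \<delta> v"
    have "nl x" using nl_ind cis_ind[OF assms(1)] x by blast
    moreover have "x \<notin> tp v" using assms(2) x unfolding Sx_def by auto
    ultimately show "pref v g x" using tp_dom[OF v g] x by blast
  qed
  then show "g \<in> bet J v" using g tp_sub tp_nl unfolding bet_def by blast
qed

lemma tp_mv: assumes "cis J" "v \<in> V" shows "tp v \<subseteq> mv J v \<union> J"
proof (cases "v \<in> Sx J")
  case True then show ?thesis using tp_bet[OF assms(1) True] unfolding mv_def by auto
next
  case False then show ?thesis unfolding mv_def by auto
qed

lemma modJ:
  assumes I: "cis I" and W: "W \<subseteq> V" and Y: "Y \<subseteq> \<Union>(\<delta> ` W)" "\<forall>w\<in>W. card (Y \<inter> \<delta> w) \<le> 1"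
    "\<forall>w\<in>W. Y \<inter> \<delta> w \<subseteq> mv I w"
    and J: "(I - \<Union>(\<delta> ` W)) \<union> Y \<in> Ind"
    and cnt: "card {w \<in> W. Y \<inter> \<delta> w = {}} < card {w \<in> W \<inter> Sx I. Y \<inter> \<delta> w \<noteq> {}}"
  shows "\<not> popular Ind V \<delta> pref I"
proof
  assume pop: "popular Ind V \<delta> pref I"
  define J' where "J' = (I - \<Union>(\<delta> ` W)) \<union> Y"
  have Jd: "J' \<inter> \<delta> u = (if u \<in> W then Y \<inter> \<delta> u else I \<inter> \<delta> u)" if u: "u \<in> V" for u
  proof (cases "u \<in> W")
    case True then show ?thesis unfolding J'_def by auto
  next
    case False
    have nW: "e \<notin> \<Union>(\<delta> ` W)" if "e \<in> \<delta> u" for e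
    proof
      assume "e \<in> \<Union>(\<delta> ` W)"
      then obtain w where "w \<in> W" "e \<in> \<delta> w" by blast
      then have "w = u" using disj[OF _ u, of w e] W that by blast
      then show False using \<open>w \<in> W\<close> False by simp
    qed
    have "Y \<inter> \<delta> u = {}" using Y(1) nW by blast
    moreover have "(I - \<Union>(\<delta> ` W)) \<inter> \<delta> u = I \<inter> \<delta> u" using nW by blast
    ultimately show ?thesis using False unfolding J'_def by auto
  qed
  have cisJ: "cis J'"
    unfolding cis_def
  proof (intro conjI ballI)
    show "J' \<in> Ind" using J unfolding J'_def by simp
    fix u assume u: "u \<in> V"
    show "card (J' \<inter> \<delta> u) \<le> 1"
    proof (cases "u \<in> W")
      case True then show ?thesis using Jd[OF u] Y(2) by simp
    next
      case False then show ?thesis using Jd[OF u] I u unfolding cis_def by simp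
    qed
  qed
  have IInd: "I \<in> Ind" using I cis_ind by blast
  have L: "{v\<in>V. prefers \<delta> pref v I J'} \<subseteq> {w \<in> W. Y \<inter> \<delta> w = {}}"
  proof (rule subsetI)
    fix v assume "v \<in> {v\<in>V. prefers \<delta> pref v I J'}"
    then have v: "v \<in> V" and p: "prefers \<delta> pref v I J'" by auto
    have vW: "v \<in> W"
    proof (rule ccontr)
      assume "v \<notin> W"
      then have "J' \<inter> \<delta> v = I \<inter> \<delta> v" using Jd[OF v] by simp
      moreover have "\<not> pref v e e" if "I \<inter> \<delta> v = {e}" for e using irr[OF v, of e] that by blast
      ultimately show False using p unfolding prefers_def by auto
    qed
    have "Y \<inter> \<delta> v = {}"
    proof (rule ccontr)
      assume "Y \<inter> \<delta> v \<noteq> {}"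
      then obtain e where e: "e \<in> Y" "e \<in> \<delta> v" by blast
      have "Y \<inter> \<delta> v = {e}" using Y(2) vW e fin_d[OF v] card1_single[of "Y \<inter> \<delta> v" e] by blast
      then have Je: "J' \<inter> \<delta> v = {e}" using Jd[OF v] vW by simp
      have emv: "e \<in> mv I v" using Y(3) vW e by blast
      from p Je obtain x where x: "I \<inter> \<delta> v = {x}" "pref v x e" unfolding prefers_def by auto
      have xd: "x \<in> \<delta> v" using x by blast
      show False
      proof (cases "v \<in> Sx I")
        case True
        then have "pref v e x" using emv x unfolding mv_def bet_def by auto
        then have "pref v x x" using ptrans[OF v xd e(2) xd] x(2) by blast
        then show False using irr[OF v xd] by simp
      next
        case False
        then have et: "e \<in> tp v" using emv unfolding mv_def by auto
        have "nl x" using nl_ind[OF IInd] x by auto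
        then have "\<not> pref v x e" using tp_nopref[OF et xd] by simp
        then show False using x(2) by simp
      qed
    qed
    then show "v \<in> {w \<in> W. Y \<inter> \<delta> w = {}}" using vW by simp
  qed
  have G: "{w \<in> W \<inter> Sx I. Y \<inter> \<delta> w \<noteq> {}} \<subseteq> {v\<in>V. prefers \<delta> pref v J' I}"
  proof safe
    fix w e assume w: "w \<in> W" "w \<in> Sx I" and e: "e \<in> Y" "e \<in> \<delta> w"
    have wV: "w \<in> V" using w W by auto
    then show "w \<in> V" .
    have "Y \<inter> \<delta> w = {e}" using Y(2) w e fin_d[OF wV] card1_single[of "Y \<inter> \<delta> w" e] by blast
    then have Je: "J' \<inter> \<delta> w = {e}" using Jd[OF wV] w by simp
    have "e \<in> mv I w" using Y(3) w e by blast
    then have eb: "e \<in> bet I w" using w(2) unfolding mv_def by simp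
    show "prefers \<delta> pref w J' I"
    proof (cases "I \<inter> \<delta> w = {}")
      case True then show ?thesis using Je unfolding prefers_def by auto
    next
      case False
      then obtain x where x: "x \<in> I \<inter> \<delta> w" by blast
      then have "I \<inter> \<delta> w = {x}" using cis_single[OF I wV] by blast
      moreover have "pref w e x" using eb x unfolding bet_def by auto
      ultimately show ?thesis using Je unfolding prefers_def by auto
    qed
  qed
  have fW: "finite W" using W finV finite_subset by blast
  have "phi V \<delta> pref I J' \<le> card {w \<in> W. Y \<inter> \<delta> w = {}}"
    unfolding phi_def by (rule card_mono) (use fW L in auto)
  also have "\<dots> < card {w \<in> W \<inter> Sx I. Y \<inter> \<delta> w \<noteq> {}}" by (rule cnt)
  also have "\<dots> \<le> phi V \<delta> pref J' I"
    unfolding phi_def by (rule card_mono) (use finV G in auto)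
  finally have "phi V \<delta> pref I J' < phi V \<delta> pref J' I" .
  moreover have "common_indep Ind V \<delta> J'" using cisJ cis_eq by simp
  ultimately show False using pop unfolding popular_def by (meson leD)
qed

end

context popl begin

definition kicks :: "'a set \<Rightarrow> 'a \<Rightarrow> 'v \<Rightarrow> bool" where
  "kicks I e w \<longleftrightarrow> w \<in> V \<and> I \<inter> \<delta> w \<noteq> {} \<and> insert e (I - {elt I w}) \<in> Ind"

definition pth :: "'a set \<Rightarrow> 'v \<Rightarrow> nat \<Rightarrow> (nat \<Rightarrow> 'v) \<Rightarrow> (nat \<Rightarrow> 'a) \<Rightarrow> bool" where
  "pth I s m v y \<longleftrightarrow> v 0 = s \<and> (\<forall>i<m. y i \<in> mv I (v i) \<and> kicks I (y i) (v (Suc i)))"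

definition bad :: "'a set \<Rightarrow> 'v \<Rightarrow> ('v \<Rightarrow> 'a \<Rightarrow> bool) \<Rightarrow> nat \<Rightarrow> (nat \<Rightarrow> 'v) \<Rightarrow> (nat \<Rightarrow> 'a) \<Rightarrow> bool" where
  "bad I s F m v y \<longleftrightarrow> pth I s m v y \<and> y m \<in> mv I (v m) \<and> F (v m) (y m)"

lemma pth_V: assumes "pth I s m v y" "s \<in> V" "i \<le> m" shows "v i \<in> V"
proof (cases i)
  case 0 then show ?thesis using assms unfolding pth_def by simp
next
  case (Suc j) then have "j < m" using assms by simp
  then show ?thesis using assms(1) Suc unfolding pth_def kicks_def by blast
qed

lemma pth_prefix: "pth I s m v y \<Longrightarrow> i \<le> m \<Longrightarrow> pth I s i v y"
  unfolding pth_def by auto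

lemma pth_upd: "pth I s i v y \<Longrightarrow> pth I s i v (y(i := e))"
  unfolding pth_def by auto

lemma pth_cut:
  assumes p: "pth I s m v y" and ab: "a \<le> b" "b < m" and Y: "Y \<in> mv I (v a)" "kicks I Y (v (Suc b))"
  shows "pth I s (m - (b - a)) (\<lambda>k. if k \<le> a then v k else v (k + (b - a)))
                 (\<lambda>k. if k < a then y k else if k = a then Y else y (k + (b - a)))"
proof -
  define v' where "v' = (\<lambda>k. if k \<le> a then v k else v (k + (b - a)))"
  define y' where "y' = (\<lambda>k. if k < a then y k else if k = a then Y else y (k + (b - a)))"
  have "v' 0 = s" using p unfolding pth_def v'_def by simp
  moreover have "y' k \<in> mv I (v' k) \<and> kicks I (y' k) (v' (Suc k))" if k: "k < m - (b - a)" for k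
  proof (cases "k < a")
    case True
    then have "k < m" using ab by simp
    then show ?thesis using p True unfolding pth_def v'_def y'_def by auto
  next
    case False
    show ?thesis
    proof (cases "k = a")
      case True then show ?thesis using Y ab unfolding v'_def y'_def by auto
    next
      case False
      then have ka: "a < k" using \<open>\<not> k < a\<close> by simp
      have "k + (b - a) < m" using k ab by simp
      then have "y (k + (b - a)) \<in> mv I (v (k + (b - a))) \<and> kicks I (y (k + (b - a))) (v (Suc (k + (b - a))))"
        using p unfolding pth_def by blast
      moreover have "Suc k + (b - a) = Suc (k + (b - a))" by simp
      ultimately show ?thesis using ka unfolding v'_def y'_def by auto
    qed
  qed
  ultimately show ?thesis unfolding pth_def v'_def y'_def by blast
qed

lemma pth_ext: "pth I s m v y \<Longrightarrow> y m \<in> mv I (v m) \<Longrightarrow> kicks I (y m) u \<Longrightarrow> pth I s (Suc m) (v(Suc m := u)) y"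
  unfolding pth_def by (auto simp: less_Suc_eq)

lemma inj_from_ne: fixes v :: "nat \<Rightarrow> 'b" and m :: nat shows "(\<And>a b. a < b \<Longrightarrow> b \<le> m \<Longrightarrow> v a \<noteq> v b) \<Longrightarrow> inj_on v {..m}"
  unfolding inj_on_def
proof (intro ballI impI)
  fix a b :: nat assume h: "\<And>a b. a < b \<Longrightarrow> b \<le> m \<Longrightarrow> v a \<noteq> v b" and a: "a \<in> {..m}" and b: "b \<in> {..m}" and e: "v a = v b"
  show "a = b"
  proof (cases a b rule: linorder_cases)
    case less then show ?thesis using h[of a b] b e by auto
  next
    case equal then show ?thesis .
  next
    case greater then show ?thesis using h[of b a] a e by auto
  qed
qed

lemma min_bad:
  assumes "bad I s F m v y"
  obtains m v y where "bad I s F m v y" "inj_on v {..m}"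
    "\<forall>i j. i < j \<longrightarrow> j < m \<longrightarrow> \<not> kicks I (y i) (v (Suc j))" "\<forall>i<m. \<not> F (v i) (y i)"
proof -
  let ?P = "\<lambda>m. \<exists>v y. bad I s F m v y"
  have "\<exists>m. ?P m" using assms by blast
  then obtain m0 where m0: "?P m0" "\<forall>k<m0. \<not> ?P k" using exists_least_iff[of ?P] by blast
  then obtain v y where b: "bad I s F m0 v y" by blast
  have p: "pth I s m0 v y" and ym: "y m0 \<in> mv I (v m0)" and Fm: "F (v m0) (y m0)" using b unfolding bad_def by auto
  have ne: "v a \<noteq> v b" if ab: "a < b" "b \<le> m0" for a b
  proof
    assume eq: "v a = v b"
    show False
    proof (cases "b < m0")
      case True
      have Y: "y b \<in> mv I (v a)" "kicks I (y b) (v (Suc b))" using p True eq unfolding pth_def by auto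
      let ?v = "\<lambda>k. if k \<le> a then v k else v (k + (b - a))"
      let ?y = "\<lambda>k. if k < a then y k else if k = a then y b else y (k + (b - a))"
      have p': "pth I s (m0 - (b - a)) ?v ?y" using pth_cut[OF p _ True Y] ab by simp
      have e1: "?v (m0 - (b - a)) = v m0" "?y (m0 - (b - a)) = y m0" using ab True by auto
      have "bad I s F (m0 - (b - a)) ?v ?y" unfolding bad_def using p' e1 ym Fm by simp
      moreover have "m0 - (b - a) < m0" using ab by simp
      ultimately show False using m0(2) by blast
    next
      case False
      then have bm: "b = m0" using ab by simp
      have "pth I s a v (y(a := y m0))" using pth_upd[OF pth_prefix[OF p]] ab by simp
      moreover have "(y(a := y m0)) a \<in> mv I (v a)" using ym eq bm by simp
      moreover have "F (v a) ((y(a := y m0)) a)" using Fm eq bm by simp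
      ultimately have "bad I s F a v (y(a := y m0))" unfolding bad_def by simp
      then show False using m0(2) ab bm by blast
    qed
  qed
  have inj: "inj_on v {..m0}" by (rule inj_from_ne) (use ne in blast)
  have sc: "\<forall>i j. i < j \<longrightarrow> j < m0 \<longrightarrow> \<not> kicks I (y i) (v (Suc j))"
  proof (intro allI impI notI)
    fix i j assume ij: "i < j" "j < m0" and k: "kicks I (y i) (v (Suc j))"
    have Y: "y i \<in> mv I (v i)" using p ij unfolding pth_def by auto
    let ?v = "\<lambda>k. if k \<le> i then v k else v (k + (j - i))"
    let ?y = "\<lambda>k. if k < i then y k else if k = i then y i else y (k + (j - i))"
    have p': "pth I s (m0 - (j - i)) ?v ?y" using pth_cut[OF p _ ij(2) Y k] ij by simp
    have e1: "?v (m0 - (j - i)) = v m0" "?y (m0 - (j - i)) = y m0" using ij by auto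
    have "bad I s F (m0 - (j - i)) ?v ?y" unfolding bad_def using p' e1 ym Fm by simp
    moreover have "m0 - (j - i) < m0" using ij by simp
    ultimately show False using m0(2) by blast
  qed
  have m3: "\<forall>i<m0. \<not> F (v i) (y i)"
  proof (intro allI impI notI)
    fix i assume i: "i < m0" and F: "F (v i) (y i)"
    have "bad I s F i v y" unfolding bad_def using pth_prefix[OF p] i F p unfolding pth_def by auto
    then show False using m0(2) i by blast
  qed
  show ?thesis using that[OF b inj sc m3] .
qed

end

context mat begin
lemma swap_par:
  assumes X: "X \<in> Ind" "a \<in> X" and b: "b \<in> E" "b \<notin> X" "b \<in> cl {a}" "b \<notin> cl {}"
  shows "insert b (X - {a}) \<in> Ind"
proof (rule ccontr)
  assume dep: "insert b (X - {a}) \<notin> Ind"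
  have aE: "a \<in> E" using indE X by blast
  have "a \<in> cl (insert b {})" by (rule steinitz[OF b(1) aE]) (use b in auto)
  have XI: "X - {a} \<in> Ind" using ind_sub[OF X(1)] by blast
  have "b \<in> cl (X - {a})" by (rule dep_cl[OF XI b(1)]) (use b dep in auto)
  then have "{b} \<subseteq> cl (X - {a})" by simp
  then have "cl {b} \<subseteq> cl (X - {a})" by (rule cl_cl)
  then have "a \<in> cl (X - {a})" using \<open>a \<in> cl (insert b {})\<close> by auto
  moreover have "insert a (X - {a}) \<in> Ind" using X by (simp add: insert_absorb)
  ultimately show False using ind_not_cl by blast
qed
end

context popl begin

lemma elt_inj: assumes "cis I" "u \<in> V" "w \<in> V" "I \<inter> \<delta> u \<noteq> {}" "I \<inter> \<delta> w \<noteq> {}" "elt I u = elt I w"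
  shows "u = w"
proof -
  have "elt I u \<in> \<delta> u" "elt I w \<in> \<delta> w" using elt assms(4,5) by auto
  then show ?thesis using disj[OF assms(2,3)] assms(6) by simp
qed

lemma pth_cov: "pth I s m v y \<Longrightarrow> i < m \<Longrightarrow> I \<inter> \<delta> (v (Suc i)) \<noteq> {} \<and> v (Suc i) \<in> V"
  unfolding pth_def kicks_def by auto

lemma pth_y: assumes "pth I s m v y" "y m \<in> mv I (v m)" "i \<le> m" shows "y i \<in> mv I (v i)"
  using assms unfolding pth_def by (cases "i = m") auto

lemma Ycap:
  assumes p: "pth I s m v y" "y m \<in> mv I (v m)" and s: "s \<in> V" and inj: "inj_on v {..m}" and i: "i \<le> m"
  shows "y ` {..m} \<inter> \<delta> (v i) = {y i}"
proof -
  have yi: "y i \<in> \<delta> (v i)" using pth_y[OF p i] mv_sub by blast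
  have "j = i" if j: "j \<le> m" "y j \<in> \<delta> (v i)" for j
  proof -
    have "y j \<in> \<delta> (v j)" using pth_y[OF p j(1)] mv_sub by blast
    then have "v j = v i" using disj[OF pth_V[OF p(1) s j(1)] pth_V[OF p(1) s i]] j(2) by blast
    then show ?thesis using inj j(1) i unfolding inj_on_def by auto
  qed
  then show ?thesis using yi i by auto
qed

lemma path_J:
  assumes I: "cis I" and s: "s \<in> Sx I" and p: "pth I s m v y" "y m \<in> mv I (v m)" and inj: "inj_on v {..m}"
   and J: "(I - \<Union>(\<delta> ` v ` {..m})) \<union> y ` {..m} \<in> Ind"
  shows "\<not> popular Ind V \<delta> pref I"
proof -
  have sV: "s \<in> V" using s unfolding Sx_def by auto
  have W: "v ` {..m} \<subseteq> V" using pth_V[OF p(1) sV] by auto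
  have Y1: "y ` {..m} \<subseteq> \<Union>(\<delta> ` v ` {..m})" using pth_y[OF p] mv_sub by blast
  have Yc: "\<forall>w\<in>v ` {..m}. y ` {..m} \<inter> \<delta> w = {y (inv_into {..m} v w)}"
  proof
    fix w assume "w \<in> v ` {..m}"
    then obtain i where i: "i \<le> m" "w = v i" by auto
    have "inv_into {..m} v w = i" using inv_into_f_f[OF inj, of i] i by simp
    then show "y ` {..m} \<inter> \<delta> w = {y (inv_into {..m} v w)}" using Ycap[OF p sV inj i(1)] i by simp
  qed
  have Y2: "\<forall>w\<in>v ` {..m}. card (y ` {..m} \<inter> \<delta> w) \<le> 1" using Yc by simp
  have Y3: "\<forall>w\<in>v ` {..m}. y ` {..m} \<inter> \<delta> w \<subseteq> mv I w"
  proof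
    fix w assume "w \<in> v ` {..m}"
    then obtain i where i: "i \<le> m" "w = v i" by auto
    then show "y ` {..m} \<inter> \<delta> w \<subseteq> mv I w" using Ycap[OF p sV inj i(1)] pth_y[OF p i(1)] by simp
  qed
  have c0: "{w \<in> v ` {..m}. y ` {..m} \<inter> \<delta> w = {}} = {}" using Yc by auto
  have "s \<in> {w \<in> v ` {..m} \<inter> Sx I. y ` {..m} \<inter> \<delta> w \<noteq> {}}"
    using Ycap[OF p sV inj, of 0] p(1) s unfolding pth_def by force
  moreover have "finite {w \<in> v ` {..m} \<inter> Sx I. y ` {..m} \<inter> \<delta> w \<noteq> {}}" by simp
  ultimately have "0 < card {w \<in> v ` {..m} \<inter> Sx I. y ` {..m} \<inter> \<delta> w \<noteq> {}}" using card_gt_0_iff by blast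
  moreover have "card {w \<in> v ` {..m}. y ` {..m} \<inter> \<delta> w = {}} = 0" by (simp only: c0 card.empty)
  ultimately have cnt: "card {w \<in> v ` {..m}. y ` {..m} \<inter> \<delta> w = {}} < card {w \<in> v ` {..m} \<inter> Sx I. y ` {..m} \<inter> \<delta> w \<noteq> {}}"
    by linarith
  show ?thesis by (rule modJ[OF I W Y1 Y2 Y3 J cnt])
qed

lemma no_free:
  assumes I: "cis I" and pop: "popular Ind V \<delta> pref I" and s: "s \<in> Sx I"
  shows "\<not> bad I s (\<lambda>w e. insert e I \<in> Ind) m v y"
proof
  assume "bad I s (\<lambda>w e. insert e I \<in> Ind) m v y"
  then obtain m v y where b: "bad I s (\<lambda>w e. insert e I \<in> Ind) m v y" and inj: "inj_on v {..m}"
    and sc: "\<forall>i j. i < j \<longrightarrow> j < m \<longrightarrow> \<not> kicks I (y i) (v (Suc j))"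
    and m3: "\<forall>i<m. insert (y i) I \<notin> Ind"
    by (rule min_bad) auto
  have p: "pth I s m v y" "y m \<in> mv I (v m)" and fr: "insert (y m) I \<in> Ind" using b unfolding bad_def by auto
  have sV: "s \<in> V" using s unfolding Sx_def by auto
  have IInd: "I \<in> Ind" using I cis_ind by blast
  define x where "x = (\<lambda>i. elt I (v (Suc i)))"
  have vV: "\<And>i. i \<le> m \<Longrightarrow> v i \<in> V" using pth_V[OF p(1) sV] .
  have cov: "\<And>i. i < m \<Longrightarrow> I \<inter> \<delta> (v (Suc i)) \<noteq> {}" using pth_cov[OF p(1)] by blast
  have xI: "\<And>i. i < m \<Longrightarrow> x i \<in> I \<inter> \<delta> (v (Suc i))" unfolding x_def using elt cov by blast
  have yd: "\<And>i. i \<le> m \<Longrightarrow> y i \<in> \<delta> (v i)" using pth_y[OF p] mv_sub by blast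
  have yI: "\<And>i. i \<le> m \<Longrightarrow> y i \<notin> I" using pth_y[OF p] mv_disj vV by blast
  have yinj: "inj_on y {..m}"
    unfolding inj_on_def
  proof (intro ballI impI)
    fix a b assume ab: "a \<in> {..m}" "b \<in> {..m}" "y a = y b"
    then have "v a = v b" using disj[OF vV vV] yd by (metis atMost_iff)
    then show "a = b" using inj ab unfolding inj_on_def by blast
  qed
  have xinj: "inj_on x {..<m}"
    unfolding inj_on_def
  proof (intro ballI impI)
    fix a b assume ab: "a \<in> {..<m}" "b \<in> {..<m}" "x a = x b"
    then have "v (Suc a) = v (Suc b)" using elt_inj[OF I vV vV cov cov] unfolding x_def by auto
    moreover have "Suc a \<in> {..m}" "Suc b \<in> {..m}" using ab by auto
    ultimately have "Suc a = Suc b" using inj_onD[OF inj] by blast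
    then show "a = b" by simp
  qed
  have c1: "x ` {..<m} \<subseteq> I" using xI by auto
  have c2: "y ` {..<m} \<inter> I = {}" using yI by auto
  have yE: "\<And>i. i \<le> m \<Longrightarrow> y i \<in> E" using yd dE vV by blast
  have c3: "y ` {..<m} \<subseteq> E" using yE by auto
  have c4: "\<forall>i<m. insert (y i) (I - {x i}) \<in> Ind" using p(1) unfolding pth_def kicks_def x_def by blast
  have c5: "\<forall>i j. i < j \<longrightarrow> j < m \<longrightarrow> insert (y i) (I - {x j}) \<notin> Ind"
    using sc vV cov unfolding kicks_def x_def by (meson Suc_leI)
  have c6: "y m \<notin> y ` {..<m}"
  proof
    assume "y m \<in> y ` {..<m}"
    then obtain j where j: "j < m" "y m = y j" by auto
    then have "m = j" using inj_onD[OF yinj j(2)] by auto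
    then show False using j by simp
  qed
  have J0: "insert (y m) ((I - x ` {..<m}) \<union> y ` {..<m}) \<in> Ind"
    by (rule UM_free[OF IInd xinj inj_on_subset[OF yinj] c1 c2 c3 c4 c5 yI fr c6 m3]) auto
  have sub: "(I - \<Union>(\<delta> ` v ` {..m})) \<union> y ` {..m} \<subseteq> insert (y m) ((I - x ` {..<m}) \<union> y ` {..<m})"
  proof -
    have "x ` {..<m} \<subseteq> \<Union>(\<delta> ` v ` {..m})" using xI by (force simp: Suc_le_eq)
    moreover have "y ` {..m} = insert (y m) (y ` {..<m})" by (auto simp: le_less)
    ultimately show ?thesis by blast
  qed
  have "(I - \<Union>(\<delta> ` v ` {..m})) \<union> y ` {..m} \<in> Ind" by (rule ind_sub[OF J0 sub])
  then show False using path_J[OF I s p inj] pop by blast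
qed


lemma no_cyc:
  assumes I: "cis I" and pop: "popular Ind V \<delta> pref I" and s: "s \<in> Sx I"
  shows "\<not> bad I s (\<lambda>w e. kicks I e s) m v y"
proof
  assume "bad I s (\<lambda>w e. kicks I e s) m v y"
  then obtain m v y where b: "bad I s (\<lambda>w e. kicks I e s) m v y" and inj: "inj_on v {..m}"
    and sc: "\<forall>i j. i < j \<longrightarrow> j < m \<longrightarrow> \<not> kicks I (y i) (v (Suc j))"
    and m3: "\<forall>i<m. \<not> kicks I (y i) s"
    by (rule min_bad) auto
  have p: "pth I s m v y" "y m \<in> mv I (v m)" and ks: "kicks I (y m) s" using b unfolding bad_def by auto
  have sV: "s \<in> V" using s unfolding Sx_def by auto
  have IInd: "I \<in> Ind" using I cis_ind by blast
  define v' where "v' = v(Suc m := s)"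
  have p': "pth I s (Suc m) v' y" unfolding v'_def by (rule pth_ext[OF p ks])
  define x where "x = (\<lambda>i. elt I (v' (Suc i)))"
  have vV: "\<And>i. i \<le> m \<Longrightarrow> v i \<in> V" using pth_V[OF p(1) sV] .
  have v'V: "\<And>i. i \<le> Suc m \<Longrightarrow> v' i \<in> V" using pth_V[OF p' sV] .
  have cov: "\<And>i. i < Suc m \<Longrightarrow> I \<inter> \<delta> (v' (Suc i)) \<noteq> {}" using pth_cov[OF p'] by blast
  have xI: "\<And>i. i < Suc m \<Longrightarrow> x i \<in> I \<inter> \<delta> (v' (Suc i))" unfolding x_def using elt cov by blast
  have yd: "\<And>i. i \<le> m \<Longrightarrow> y i \<in> \<delta> (v i)" using pth_y[OF p] mv_sub by blast
  have yI: "\<And>i. i \<le> m \<Longrightarrow> y i \<notin> I" using pth_y[OF p] mv_disj vV by blast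
  have yE: "\<And>i. i \<le> m \<Longrightarrow> y i \<in> E" using yd dE vV by blast
  have yinj: "inj_on y {..m}"
    unfolding inj_on_def
  proof (intro ballI impI)
    fix a b assume ab: "a \<in> {..m}" "b \<in> {..m}" "y a = y b"
    then have "v a = v b" using disj[OF vV vV] yd by (metis atMost_iff)
    then show "a = b" using inj ab unfolding inj_on_def by blast
  qed
  have v'S: "v' (Suc i) = v (if i < m then Suc i else 0)" if "i \<le> m" for i
    using that p(1) unfolding v'_def pth_def by auto
  have xinj: "inj_on x {..<Suc m}"
    unfolding inj_on_def
  proof (intro ballI impI)
    fix a b assume ab: "a \<in> {..<Suc m}" "b \<in> {..<Suc m}" "x a = x b"
    then have "v' (Suc a) = v' (Suc b)" using elt_inj[OF I v'V v'V cov cov] unfolding x_def by auto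
    then have e: "v (if a < m then Suc a else 0) = v (if b < m then Suc b else 0)" using v'S ab by auto
    have "(if a < m then Suc a else 0) \<in> {..m}" "(if b < m then Suc b else 0) \<in> {..m}" by auto
    then have "(if a < m then Suc a else 0) = (if b < m then Suc b else 0)" using inj_onD[OF inj e] by blast
    then show "a = b" using ab by (auto split: if_splits)
  qed
  have c1: "x ` {..<Suc m} \<subseteq> I" using xI by auto
  have c2: "y ` {..<Suc m} \<inter> I = {}" using yI by (auto simp: less_Suc_eq_le)
  have c3: "y ` {..<Suc m} \<subseteq> E" using yE by (auto simp: less_Suc_eq_le)
  have c4: "\<forall>i<Suc m. insert (y i) (I - {x i}) \<in> Ind" using p' unfolding pth_def kicks_def x_def by blast
  have c5: "\<forall>i j. i < j \<longrightarrow> j < Suc m \<longrightarrow> insert (y i) (I - {x j}) \<notin> Ind"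
  proof (intro allI impI notI)
    fix i j assume ij: "i < j" "j < Suc m" and ins: "insert (y i) (I - {x j}) \<in> Ind"
    have "kicks I (y i) (v' (Suc j))" unfolding kicks_def using v'V[of "Suc j"] cov[of j] ins ij unfolding x_def by auto
    then show False
    proof (cases "j < m")
      case True then show False using sc ij \<open>kicks I (y i) (v' (Suc j))\<close> unfolding v'_def by auto
    next
      case False then have "j = m" using ij by simp
      then show False using m3 ij \<open>kicks I (y i) (v' (Suc j))\<close> unfolding v'_def by auto
    qed
  qed
  have J0: "(I - x ` {..<Suc m}) \<union> y ` {..<Suc m} \<in> Ind"
    by (rule UM[OF IInd xinj inj_on_subset[OF yinj] c1 c2 c3 c4 c5]) auto
  have sub: "(I - \<Union>(\<delta> ` v ` {..m})) \<union> y ` {..m} \<subseteq> (I - x ` {..<Suc m}) \<union> y ` {..<Suc m}"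
  proof -
    have "x i \<in> \<Union>(\<delta> ` v ` {..m})" if i: "i < Suc m" for i
    proof -
      have "x i \<in> \<delta> (v (if i < m then Suc i else 0))" using xI[OF i] v'S i by auto
      moreover have "(if i < m then Suc i else 0) \<in> {..m}" by auto
      ultimately show ?thesis by blast
    qed
    then have "x ` {..<Suc m} \<subseteq> \<Union>(\<delta> ` v ` {..m})" by blast
    moreover have "y ` {..m} = y ` {..<Suc m}" by (simp add: lessThan_Suc_atMost)
    ultimately show ?thesis by blast
  qed
  have "(I - \<Union>(\<delta> ` v ` {..m})) \<union> y ` {..m} \<in> Ind" by (rule ind_sub[OF J0 sub])
  then show False using path_J[OF I s p inj] pop by blast
qed

end

context popl begin

lemma card2: "finite A \<Longrightarrow> s \<in> A \<Longrightarrow> t \<in> A \<Longrightarrow> s \<noteq> t \<Longrightarrow> 2 \<le> card A"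
  using card_mono[of A "{s,t}"] by auto

lemma card_le1: "finite A \<Longrightarrow> A \<subseteq> {u} \<Longrightarrow> card A \<le> 1"
  using card_mono[of "{u}" A] by auto

lemma no_B3:
  assumes I: "cis I" and pop: "popular Ind V \<delta> pref I" and s: "s \<in> Sx I"
  shows "\<not> bad I s (\<lambda>w e. \<exists>t\<in>Sx I - {s}. kicks I e t) m v y"
proof
  assume "bad I s (\<lambda>w e. \<exists>t\<in>Sx I - {s}. kicks I e t) m v y"
  then obtain m v y where b: "bad I s (\<lambda>w e. \<exists>t\<in>Sx I - {s}. kicks I e t) m v y" and inj: "inj_on v {..m}"
    and sc: "\<forall>i j. i < j \<longrightarrow> j < m \<longrightarrow> \<not> kicks I (y i) (v (Suc j))"
    and m3: "\<forall>i<m. \<not> (\<exists>t\<in>Sx I - {s}. kicks I (y i) t)"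
    by (rule min_bad) auto
  have p: "pth I s m v y" "y m \<in> mv I (v m)" using b unfolding bad_def by auto
  obtain t where t: "t \<in> Sx I" "t \<noteq> s" "kicks I (y m) t" using b unfolding bad_def by auto
  have sV: "s \<in> V" using s unfolding Sx_def by auto
  have tV: "t \<in> V" using t unfolding Sx_def by auto
  have IInd: "I \<in> Ind" using I cis_ind by blast
  define v' where "v' = v(Suc m := t)"
  have p': "pth I s (Suc m) v' y" unfolding v'_def by (rule pth_ext[OF p t(3)])
  define x where "x = (\<lambda>i. elt I (v' (Suc i)))"
  have vV: "\<And>i. i \<le> m \<Longrightarrow> v i \<in> V" using pth_V[OF p(1) sV] .
  have v'V: "\<And>i. i \<le> Suc m \<Longrightarrow> v' i \<in> V" using pth_V[OF p' sV] .
  have cov: "\<And>i. i < Suc m \<Longrightarrow> I \<inter> \<delta> (v' (Suc i)) \<noteq> {}" using pth_cov[OF p'] by blast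
  have xI: "\<And>i. i < Suc m \<Longrightarrow> x i \<in> I \<inter> \<delta> (v' (Suc i))" unfolding x_def using elt cov by blast
  have yd: "\<And>i. i \<le> m \<Longrightarrow> y i \<in> \<delta> (v i)" using pth_y[OF p] mv_sub by blast
  have yI: "\<And>i. i \<le> m \<Longrightarrow> y i \<notin> I" using pth_y[OF p] mv_disj vV by blast
  have yE: "\<And>i. i \<le> m \<Longrightarrow> y i \<in> E" using yd dE vV by blast
  have yinj: "inj_on y {..m}"
    unfolding inj_on_def
  proof (intro ballI impI)
    fix a b assume ab: "a \<in> {..m}" "b \<in> {..m}" "y a = y b"
    then have "v a = v b" using disj[OF vV vV] yd by (metis atMost_iff)
    then show "a = b" using inj ab unfolding inj_on_def by blast
  qed
  have tne: "v i \<noteq> t" if i: "i \<le> m" for i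
  proof (cases i)
    case 0 then show ?thesis using p(1) t(2) unfolding pth_def by auto
  next
    case (Suc j)
    then have "j < m" using i by simp
    then have "kicks I (y j) (v (Suc j))" using p(1) unfolding pth_def by auto
    then show ?thesis using m3 \<open>j < m\<close> t(1) t(2) Suc by auto
  qed
  have v'S: "v' (Suc i) = (if i < m then v (Suc i) else t)" if "i \<le> m" for i
    using that unfolding v'_def by auto
  have xinj: "inj_on x {..<Suc m}"
    unfolding inj_on_def
  proof (intro ballI impI)
    fix a b assume ab: "a \<in> {..<Suc m}" "b \<in> {..<Suc m}" "x a = x b"
    then have e: "v' (Suc a) = v' (Suc b)" using elt_inj[OF I v'V v'V cov cov] unfolding x_def by auto
    show "a = b"
    proof (cases "a < m")
      case True note a = this
      show ?thesis
      proof (cases "b < m")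
        case True
        then have "v (Suc a) = v (Suc b)" using e a v'S ab by auto
        moreover have "Suc a \<in> {..m}" "Suc b \<in> {..m}" using a True by auto
        ultimately show ?thesis using inj_onD[OF inj] by blast
      next
        case False
        then have "v (Suc a) = t" using e a v'S ab by auto
        then show ?thesis using tne[of "Suc a"] a by simp
      qed
    next
      case False note a = this
      show ?thesis
      proof (cases "b < m")
        case True
        then have "v (Suc b) = t" using e a v'S ab by auto
        then show ?thesis using tne[of "Suc b"] True by simp
      next
        case False then show ?thesis using a ab by auto
      qed
    qed
  qed
  have c1: "x ` {..<Suc m} \<subseteq> I" using xI by auto
  have c2: "y ` {..<Suc m} \<inter> I = {}" using yI by (auto simp: less_Suc_eq_le)
  have c3: "y ` {..<Suc m} \<subseteq> E" using yE by (auto simp: less_Suc_eq_le)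
  have c4: "\<forall>i<Suc m. insert (y i) (I - {x i}) \<in> Ind" using p' unfolding pth_def kicks_def x_def by blast
  have c5: "\<forall>i j. i < j \<longrightarrow> j < Suc m \<longrightarrow> insert (y i) (I - {x j}) \<notin> Ind"
  proof (intro allI impI notI)
    fix i j assume ij: "i < j" "j < Suc m" and ins: "insert (y i) (I - {x j}) \<in> Ind"
    have k: "kicks I (y i) (v' (Suc j))" unfolding kicks_def using v'V[of "Suc j"] cov[of j] ins ij unfolding x_def by auto
    show False
    proof (cases "j < m")
      case True then show False using sc ij k unfolding v'_def by auto
    next
      case False then have "j = m" using ij by simp
      then show False using m3 ij k t(1,2) unfolding v'_def by auto
    qed
  qed
  have J0: "(I - x ` {..<Suc m}) \<union> y ` {..<Suc m} \<in> Ind"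
    by (rule UM[OF IInd xinj inj_on_subset[OF yinj] c1 c2 c3 c4 c5]) auto
  define W0 where "W0 = insert t (v ` {..m})"
  define Y0 where "Y0 = y ` {..m}"
  define I2 where "I2 = (I - \<Union>(\<delta> ` W0)) \<union> Y0"
  have W0V: "W0 \<subseteq> V" unfolding W0_def using tV vV by auto
  have sW0: "s \<in> W0" "t \<in> W0" unfolding W0_def using p(1) unfolding pth_def by auto
  have sub: "I2 \<subseteq> (I - x ` {..<Suc m}) \<union> y ` {..<Suc m}"
  proof -
    have "x i \<in> \<Union>(\<delta> ` W0)" if i: "i < Suc m" for i
    proof -
      have "v' (Suc i) \<in> W0" using v'S[of i] i unfolding W0_def by (auto simp: Suc_le_eq)
      then show ?thesis using xI[OF i] by blast
    qed
    then have "x ` {..<Suc m} \<subseteq> \<Union>(\<delta> ` W0)" by blast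
    moreover have "Y0 = y ` {..<Suc m}" unfolding Y0_def by (simp add: lessThan_Suc_atMost)
    ultimately show ?thesis unfolding I2_def by blast
  qed
  have I2ind: "I2 \<in> Ind" by (rule ind_sub[OF J0 sub])
  obtain xt where xt: "xt \<in> I \<inter> \<delta> t" using t(3) unfolding kicks_def by blast
  have "nl xt" using nl_ind[OF IInd] xt by blast
  then have "tp t \<noteq> {}" using tp_ne[OF tV] xt by blast
  then obtain y' where y't: "y' \<in> tp t" by blast
  have y'mv: "y' \<in> mv I t" using tp_bet[OF I t(1)] y't t(1) unfolding mv_def by auto
  have y'd: "y' \<in> \<delta> t" using y't tp_sub by blast
  have y'E: "y' \<in> E" using y'd dE tV by blast
  have y'I: "y' \<notin> I" using mv_disj[OF tV] y'mv by blast
  have y'nl: "nl y'" using y't tp_nl by blast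
  have y'vi: "y' \<notin> \<delta> (v i)" if "i \<le> m" for i using disj[OF tV vV[OF that]] y'd tne[OF that] by blast
  have Y0t: "Y0 \<inter> \<delta> t = {}"
  proof -
    have "y i \<notin> \<delta> t" if "i \<le> m" for i using disj[OF tV vV[OF that]] yd[OF that] tne[OF that] by blast
    then show ?thesis unfolding Y0_def by auto
  qed
  have y'Y0: "y' \<notin> Y0" using Y0t y'd by blast
  have y'I2: "y' \<notin> I2" unfolding I2_def using y'I y'Y0 by blast
  have Yc: "Y0 \<inter> \<delta> (v i) = {y i}" if "i \<le> m" for i unfolding Y0_def by (rule Ycap[OF p sV inj that])
  have Y0sub: "Y0 \<subseteq> \<Union>(\<delta> ` W0)"
  proof
    fix e assume "e \<in> Y0"
    then obtain i where i: "i \<le> m" "e = y i" unfolding Y0_def by auto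
    then have "e \<in> \<delta> (v i)" "v i \<in> W0" using yd unfolding W0_def by auto
    then show "e \<in> \<Union>(\<delta> ` W0)" by blast
  qed
  have gain2: "2 \<le> card {w \<in> W \<inter> Sx I. Y \<inter> \<delta> w \<noteq> {}}"
    if "s \<in> W" "t \<in> W" "W \<subseteq> V" "Y \<inter> \<delta> s \<noteq> {}" "Y \<inter> \<delta> t \<noteq> {}" for W Y
  proof (rule card2)
    show "finite {w \<in> W \<inter> Sx I. Y \<inter> \<delta> w \<noteq> {}}" by (rule finite_subset[OF _ finV]) (use that(3) in auto)
  qed (use that s t in auto)
  have s0: "v 0 = s" using p(1) unfolding pth_def by simp
  show False
  proof (cases "insert y' I2 \<in> Ind")
    case True
    let ?Y = "insert y' Y0"
    have Jeq: "(I - \<Union>(\<delta> ` W0)) \<union> ?Y = insert y' I2" unfolding I2_def by auto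
    have Ysub: "?Y \<subseteq> \<Union>(\<delta> ` W0)" using Y0sub y'd sW0 by blast
    have Ycap: "?Y \<inter> \<delta> w = (if w = t then {y'} else {y (inv_into {..m} v w)})" if w0: "w \<in> W0" for w
    proof (cases "w = t")
      case True then show ?thesis using Y0t y'd by auto
    next
      case False
      then obtain i where i: "i \<le> m" "w = v i" using w0 unfolding W0_def by auto
      have "inv_into {..m} v w = i" using inv_into_f_f[OF inj, of i] i by simp
      then show ?thesis using Yc[OF i(1)] y'vi[OF i(1)] i False by auto
    qed
    have Y2: "\<forall>w\<in>W0. card (?Y \<inter> \<delta> w) \<le> 1" using Ycap by simp
    have Y3: "\<forall>w\<in>W0. ?Y \<inter> \<delta> w \<subseteq> mv I w"
    proof
      fix w assume w: "w \<in> W0"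
      show "?Y \<inter> \<delta> w \<subseteq> mv I w"
      proof (cases "w = t")
        case True then show ?thesis using Ycap[OF w] y'mv by simp
      next
        case False
        then obtain i where i: "i \<le> m" "w = v i" using w unfolding W0_def by auto
        then show ?thesis using Yc[OF i(1)] y'vi[OF i(1)] pth_y[OF p i(1)] by auto
      qed
    qed
    have "{w \<in> W0. ?Y \<inter> \<delta> w = {}} = {}"
    proof -
      have "?Y \<inter> \<delta> w \<noteq> {}" if w: "w \<in> W0" for w by (subst Ycap[OF w]) simp
      then show ?thesis by blast
    qed
    then have l0: "card {w \<in> W0. ?Y \<inter> \<delta> w = {}} = 0" by (simp only: card.empty)
    have "?Y \<inter> \<delta> s \<noteq> {}" by (subst Ycap[OF sW0(1)]) simp
    moreover have "?Y \<inter> \<delta> t \<noteq> {}" by (subst Ycap[OF sW0(2)]) simp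
    ultimately have "2 \<le> card {w \<in> W0 \<inter> Sx I. ?Y \<inter> \<delta> w \<noteq> {}}" by (rule gain2[OF sW0(1,2) W0V])
    then have cnt: "card {w \<in> W0. ?Y \<inter> \<delta> w = {}} < card {w \<in> W0 \<inter> Sx I. ?Y \<inter> \<delta> w \<noteq> {}}" using l0 by linarith
    show False using modJ[OF I W0V Ysub Y2 Y3 _ cnt] Jeq True pop by simp
  next
    case False
    have y'cl: "y' \<in> cl I2" using dep_cl[OF I2ind y'E y'I2] False by blast
    define K where "K = {z \<in> I2. insert y' (I2 - {z}) \<in> Ind}"
    have y'K: "y' \<in> cl K" unfolding K_def by (rule kick[OF I2ind y'cl y'I2])
    show False
    proof (cases "\<exists>z\<in>K. z \<noteq> y 0")
      case True
      then obtain z where z: "z \<in> I2" "insert y' (I2 - {z}) \<in> Ind" "z \<noteq> y 0" unfolding K_def by auto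
      show False
      proof (cases "z \<in> Y0")
        case True
        then obtain i where i: "i \<le> m" "z = y i" unfolding Y0_def by auto
        have i0: "i \<noteq> 0"
        proof
          assume "i = 0" then show False using z(3) i by simp
        qed
        let ?Y = "insert y' (Y0 - {y i})"
        have Jeq: "(I - \<Union>(\<delta> ` W0)) \<union> ?Y = insert y' (I2 - {z})" unfolding I2_def using i yI by auto
        have Ysub: "?Y \<subseteq> \<Union>(\<delta> ` W0)" using Y0sub y'd sW0 by blast
        have Ycap: "?Y \<inter> \<delta> w = (if w = t then {y'} else if w = v i then {} else {y (inv_into {..m} v w)})" if w0: "w \<in> W0" for w
        proof (cases "w = t")
          case True then show ?thesis using Y0t y'd by auto
        next
          case False
          then obtain j where j: "j \<le> m" "w = v j" using w0 unfolding W0_def by auto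
          have ij: "inv_into {..m} v w = j" using inv_into_f_f[OF inj, of j] j by simp
          show ?thesis
          proof (cases "j = i")
            case True then show ?thesis using Yc[OF j(1)] y'vi[OF j(1)] j False by auto
          next
            case False
            have "v j \<noteq> v i" using inj_onD[OF inj] i j False by fastforce
            then show ?thesis using Yc[OF j(1)] y'vi[OF j(1)] j \<open>w \<noteq> t\<close> ij yinj i False
              by (auto simp: inj_on_def)
          qed
        qed
        have Y2: "\<forall>w\<in>W0. card (?Y \<inter> \<delta> w) \<le> 1" using Ycap by simp
        have Y3: "\<forall>w\<in>W0. ?Y \<inter> \<delta> w \<subseteq> mv I w"
        proof
          fix w assume w: "w \<in> W0"
          show "?Y \<inter> \<delta> w \<subseteq> mv I w"
          proof (cases "w = t")
            case True then show ?thesis using Ycap[OF w] y'mv by simp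
          next
            case False
            then obtain j where j: "j \<le> m" "w = v j" using w unfolding W0_def by auto
            have "?Y \<inter> \<delta> w \<subseteq> Y0 \<inter> \<delta> (v j)" using y'vi[OF j(1)] j by auto
            then show ?thesis using Yc[OF j(1)] pth_y[OF p j(1)] j by auto
          qed
        qed
        have "{w \<in> W0. ?Y \<inter> \<delta> w = {}} \<subseteq> {v i}"
        proof -
          have "w = v i" if w: "w \<in> W0" "?Y \<inter> \<delta> w = {}" for w
            using w(2) by (subst (asm) Ycap[OF w(1)]) (simp split: if_splits)
          then show ?thesis by blast
        qed
        then have l1: "card {w \<in> W0. ?Y \<inter> \<delta> w = {}} \<le> 1" by (rule card_le1[rotated]) (rule finite_subset[OF _ finV], use W0V in auto)
        have "v i \<noteq> s"
        proof
          assume "v i = s"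
          then have "v i = v 0" using s0 by simp
          then have "i = 0" using inj_onD[OF inj] i by fastforce
          then show False using i0 by simp
        qed
        then have "?Y \<inter> \<delta> s \<noteq> {}" using t(2) by (subst Ycap[OF sW0(1)]) simp
        moreover have "?Y \<inter> \<delta> t \<noteq> {}" by (subst Ycap[OF sW0(2)]) simp
        ultimately have "2 \<le> card {w \<in> W0 \<inter> Sx I. ?Y \<inter> \<delta> w \<noteq> {}}" by (rule gain2[OF sW0(1,2) W0V])
        then have cnt: "card {w \<in> W0. ?Y \<inter> \<delta> w = {}} < card {w \<in> W0 \<inter> Sx I. ?Y \<inter> \<delta> w \<noteq> {}}" using l1 by linarith
        show False using modJ[OF I W0V Ysub Y2 Y3 _ cnt] Jeq z(2) pop by simp
      next
        case False
        then have zI: "z \<in> I - \<Union>(\<delta> ` W0)" using z(1) unfolding I2_def by blast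
        then obtain u where u: "u \<in> V" "z \<in> \<delta> u" using owner indE[OF IInd] by blast
        have uW: "u \<notin> W0" using zI u by blast
        have Iu: "I \<inter> \<delta> u = {z}" using cis_single[OF I u(1)] zI u by blast
        let ?W = "insert u W0"
        let ?Y = "insert y' Y0"
        have WV: "?W \<subseteq> V" using W0V u by blast
        have Jeq: "(I - \<Union>(\<delta> ` ?W)) \<union> ?Y = insert y' (I2 - {z})"
        proof -
          have "I - \<Union>(\<delta> ` ?W) = (I - \<Union>(\<delta> ` W0)) - {z}" using Iu by auto
          moreover have "z \<notin> Y0" using False .
          moreover have "z \<noteq> y'" using zI y'I by blast
          ultimately show ?thesis unfolding I2_def by auto
        qed
        have Ysub: "?Y \<subseteq> \<Union>(\<delta> ` ?W)" using Y0sub y'd sW0 by blast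
        have Yu: "?Y \<inter> \<delta> u = {}"
        proof -
          have "y i \<notin> \<delta> u" if "i \<le> m" for i
          proof
            assume "y i \<in> \<delta> u"
            then have "u = v i" using disj[OF u(1) vV[OF that]] yd[OF that] by blast
            then show False using uW that unfolding W0_def by auto
          qed
          moreover have "y' \<notin> \<delta> u" using disj[OF u(1) tV] y'd uW sW0 by blast
          ultimately show ?thesis unfolding Y0_def by auto
        qed
        have Ycap: "?Y \<inter> \<delta> w = (if w = u then {} else if w = t then {y'} else {y (inv_into {..m} v w)})" if w0: "w \<in> ?W" for w
        proof (cases "w = u")
          case True then show ?thesis using Yu by simp
        next
          case False note wu = this
          show ?thesis
          proof (cases "w = t")
            case True then show ?thesis using Y0t y'd wu by auto
          next
            case False
            then obtain i where i: "i \<le> m" "w = v i" using w0 wu unfolding W0_def by auto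
            have "inv_into {..m} v w = i" using inv_into_f_f[OF inj, of i] i by simp
            then show ?thesis using Yc[OF i(1)] y'vi[OF i(1)] i False wu by auto
          qed
        qed
        have Y2: "\<forall>w\<in>?W. card (?Y \<inter> \<delta> w) \<le> 1" using Ycap by simp
        have Y3: "\<forall>w\<in>?W. ?Y \<inter> \<delta> w \<subseteq> mv I w"
        proof
          fix w assume w: "w \<in> ?W"
          show "?Y \<inter> \<delta> w \<subseteq> mv I w"
          proof (cases "w = u")
            case True then show ?thesis using Yu by simp
          next
            case False note wu = this
            show ?thesis
            proof (cases "w = t")
              case True then show ?thesis using Ycap[OF w] y'mv wu by simp
            next
              case False
              then obtain j where j: "j \<le> m" "w = v j" using w wu unfolding W0_def by auto
              then show ?thesis using Yc[OF j(1)] y'vi[OF j(1)] pth_y[OF p j(1)] by auto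
            qed
          qed
        qed
        have "{w \<in> ?W. ?Y \<inter> \<delta> w = {}} \<subseteq> {u}"
        proof -
          have "w = u" if w: "w \<in> ?W" "?Y \<inter> \<delta> w = {}" for w
            using w(2) by (subst (asm) Ycap[OF w(1)]) (simp split: if_splits)
          then show ?thesis by blast
        qed
        then have l1: "card {w \<in> ?W. ?Y \<inter> \<delta> w = {}} \<le> 1" by (rule card_le1[rotated]) (rule finite_subset[OF _ finV], use WV in auto)
        have "s \<noteq> u" "t \<noteq> u" using uW sW0 by auto
        have sW: "s \<in> ?W" "t \<in> ?W" using sW0 by auto
        have "?Y \<inter> \<delta> s \<noteq> {}" using \<open>s \<noteq> u\<close> t(2) by (subst Ycap[OF sW(1)]) simp
        moreover have "?Y \<inter> \<delta> t \<noteq> {}" using \<open>t \<noteq> u\<close> by (subst Ycap[OF sW(2)]) simp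
        ultimately have "2 \<le> card {w \<in> ?W \<inter> Sx I. ?Y \<inter> \<delta> w \<noteq> {}}" by (rule gain2[OF sW WV])
        then have cnt: "card {w \<in> ?W. ?Y \<inter> \<delta> w = {}} < card {w \<in> ?W \<inter> Sx I. ?Y \<inter> \<delta> w \<noteq> {}}" using l1 by linarith
        show False using modJ[OF I WV Ysub Y2 Y3 _ cnt] Jeq z(2) pop by simp
      qed
    next
      case False
      then have "K \<subseteq> {y 0}" by blast
      then have y'c0: "y' \<in> cl {y 0}" using cl_mono y'K by blast
      have y'l: "y' \<notin> cl {}" using nl_cl[OF y'nl] .
      have k0: "kicks I (y 0) (v' 1)" using p' unfolding pth_def by auto
      define X where "X = insert (y 0) (I - {elt I (v' 1)})"
      have XI: "X \<in> Ind" using k0 unfolding kicks_def X_def by simp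
      have y'X: "y' \<notin> X" unfolding X_def using y'I y'vi[of 0] yd[of 0] by auto
      have "insert y' (X - {y 0}) \<in> Ind" by (rule swap_par[OF XI _ y'E y'X y'c0 y'l]) (simp add: X_def)
      moreover have "X - {y 0} = I - {elt I (v' 1)}" unfolding X_def using yI[of 0] by auto
      ultimately have k1: "kicks I y' (v' 1)" using k0 unfolding kicks_def by simp
      define v2 where "v2 = v'(0 := t)"
      define y2 where "y2 = y(0 := y')"
      have pt0: "v2 0 = t" unfolding v2_def by simp
      have pt1: "\<forall>i<m. y2 i \<in> mv I (v2 i) \<and> kicks I (y2 i) (v2 (Suc i))"
      proof (intro allI impI)
        fix i assume i: "i < m"
        show "y2 i \<in> mv I (v2 i) \<and> kicks I (y2 i) (v2 (Suc i))"
        proof (cases i)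
          case 0 then show ?thesis using y'mv k1 unfolding v2_def y2_def by simp
        next
          case (Suc j)
          then show ?thesis using p(1) i unfolding pth_def v2_def y2_def v'_def by auto
        qed
      qed
      have pt: "pth I t m v2 y2" unfolding pth_def using pt0 pt1 by simp
      have "bad I t (\<lambda>w e. kicks I e t) m v2 y2"
      proof (cases m)
        case 0
        then show ?thesis unfolding bad_def using pt y'mv k1 unfolding v2_def y2_def v'_def by simp
      next
        case (Suc j)
        then show ?thesis unfolding bad_def using pt p(2) t(3) unfolding v2_def y2_def v'_def by simp
      qed
      then show False using no_cyc[OF I pop t(1)] by blast
    qed
  qed
qed

end

context popl begin

definition R :: "'a set \<Rightarrow> 'v set" where "R I = {w. \<exists>s\<in>Sx I. \<exists>m v y. pth I s m v y \<and> v m = w}"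

lemma S_R: "Sx I \<subseteq> R I"
proof
  fix s assume s: "s \<in> Sx I"
  have "pth I s 0 (\<lambda>_. s) y" for y :: "nat \<Rightarrow> 'a" unfolding pth_def by simp
  then show "s \<in> R I" unfolding R_def using s by blast
qed

lemma R_V: "R I \<subseteq> V"
proof
  fix w assume "w \<in> R I"
  then obtain s m v y where "s \<in> Sx I" "pth I s m v y" "v m = w" unfolding R_def by blast
  then show "w \<in> V" using pth_V[of I s m v y m] unfolding Sx_def by auto
qed

definition Z :: "'a set \<Rightarrow> 'a set" where "Z I = I \<inter> \<Union>(\<delta> ` (R I - Sx I))"

lemma key:
  assumes I: "cis I" and pop: "popular Ind V \<delta> pref I" and w: "w \<in> R I" and e: "e \<in> mv I w"
  shows "e \<in> cl (Z I)"
proof -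
  obtain s m v y where s: "s \<in> Sx I" and p: "pth I s m v y" and vm: "v m = w" using w unfolding R_def by blast
  have sV: "s \<in> V" using s unfolding Sx_def by auto
  have wV: "w \<in> V" using w R_V by blast
  have IInd: "I \<in> Ind" using I cis_ind by blast
  define y' where "y' = y(m := e)"
  have p': "pth I s m v y'" unfolding y'_def by (rule pth_upd[OF p])
  have ym: "y' m \<in> mv I (v m)" using e vm unfolding y'_def by simp
  have eI: "e \<notin> I" using mv_disj[OF wV] e by blast
  have eE: "e \<in> E" using mv_E[OF wV] e by blast
  have nf: "insert e I \<notin> Ind"
  proof
    assume "insert e I \<in> Ind"
    then have "bad I s (\<lambda>w e. insert e I \<in> Ind) m v y'" unfolding bad_def using p' ym y'_def by simp
    then show False using no_free[OF I pop s] by blast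
  qed
  have ecl: "e \<in> cl I" using dep_cl[OF IInd eE eI nf] .
  define K where "K = {x \<in> I. insert e (I - {x}) \<in> Ind}"
  have eK: "e \<in> cl K" unfolding K_def by (rule kick[OF IInd ecl eI])
  have "K \<subseteq> Z I"
  proof
    fix x assume x: "x \<in> K"
    then have xI: "x \<in> I" and xins: "insert e (I - {x}) \<in> Ind" unfolding K_def by auto
    obtain u where u: "u \<in> V" "x \<in> \<delta> u" using owner indE[OF IInd] xI by blast
    have ex: "elt I u = x" using elt_uniq[OF I u(1)] xI u by blast
    have k: "kicks I e u" unfolding kicks_def using u xI ex xins by auto
    have k': "kicks I (y' m) u" using k unfolding y'_def by simp
    have "pth I s (Suc m) (v(Suc m := u)) y'" by (rule pth_ext[OF p' ym k'])
    then have uR: "u \<in> R I" unfolding R_def using s by fastforce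
    have uS: "u \<notin> Sx I"
    proof
      assume uS: "u \<in> Sx I"
      show False
      proof (cases "u = s")
        case True
        then have "bad I s (\<lambda>w e. kicks I e s) m v y'" unfolding bad_def using p' ym k y'_def by simp
        then show False using no_cyc[OF I pop s] by blast
      next
        case False
        then have "bad I s (\<lambda>w e. \<exists>t\<in>Sx I - {s}. kicks I e t) m v y'"
          unfolding bad_def using p' ym k uS y'_def by auto
        then show False using no_B3[OF I pop s] by blast
      qed
    qed
    show "x \<in> Z I" unfolding Z_def using xI u uR uS by blast
  qed
  then show ?thesis using cl_mono eK by blast
qed

lemma Z_tp: assumes I: "cis I" shows "Z I \<subseteq> \<Union>(tp ` (R I - Sx I))"
proof
  fix e assume "e \<in> Z I"
  then obtain w where w: "w \<in> R I" "w \<notin> Sx I" "e \<in> I" "e \<in> \<delta> w" unfolding Z_def by blast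
  have wV: "w \<in> V" using w R_V by blast
  obtain e' where e': "e' \<in> I \<inter> \<delta> w \<inter> tp w" using w wV unfolding Sx_def by blast
  have "I \<inter> \<delta> w = {e'}" using cis_single[OF I wV] e' by blast
  then have "e = e'" using w by blast
  then show "e \<in> \<Union>(tp ` (R I - Sx I))" using e' w by blast
qed

lemma card_elts:
  assumes I: "cis I" and W: "W \<subseteq> V" and c: "\<forall>w\<in>W. I \<inter> \<delta> w \<noteq> {}"
  shows "card (I \<inter> \<Union>(\<delta> ` W)) = card W"
proof -
  have eq: "I \<inter> \<Union>(\<delta> ` W) = elt I ` W"
  proof
    show "I \<inter> \<Union>(\<delta> ` W) \<subseteq> elt I ` W"
    proof
      fix e assume "e \<in> I \<inter> \<Union>(\<delta> ` W)"
      then obtain w where w: "w \<in> W" "e \<in> I \<inter> \<delta> w" by blast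
      then have "elt I w = e" using elt_uniq[OF I] W by blast
      then show "e \<in> elt I ` W" using w by blast
    qed
    show "elt I ` W \<subseteq> I \<inter> \<Union>(\<delta> ` W)"
    proof
      fix e assume "e \<in> elt I ` W"
      then obtain w where w: "w \<in> W" "e = elt I w" by blast
      then have "e \<in> I \<inter> \<delta> w" using elt c by blast
      then show "e \<in> I \<inter> \<Union>(\<delta> ` W)" using w by blast
    qed
  qed
  have inj: "inj_on (elt I) W"
    unfolding inj_on_def
  proof (intro ballI impI)
    fix a b assume ab: "a \<in> W" "b \<in> W" "elt I a = elt I b"
    show "a = b" by (rule elt_inj[OF I]) (use ab W c in auto)
  qed
  show ?thesis using eq card_image[OF inj] by simp
qed

lemma nonS_cov: "cis I \<Longrightarrow> w \<in> V \<Longrightarrow> w \<notin> Sx I \<Longrightarrow> I \<inter> \<delta> w \<noteq> {}" unfolding Sx_def by auto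

lemma nonS_tp: assumes I: "cis I" and w: "w \<in> V" "w \<notin> Sx I" "e \<in> I \<inter> \<delta> w" shows "e \<in> tp w"
proof -
  obtain e' where e': "e' \<in> I \<inter> \<delta> w \<inter> tp w" using w unfolding Sx_def by blast
  have "I \<inter> \<delta> w = {e'}" using cis_single[OF I w(1)] e' by blast
  then have "e = e'" using w(3) by blast
  then show ?thesis using e' by blast
qed

definition T :: "'v set \<Rightarrow> 'a set" where "T A = \<Union>(tp ` A)"
definition g :: "'v set \<Rightarrow> nat" where "g A = card A + rk (T (V - A))"

lemma T_E: "A \<subseteq> V \<Longrightarrow> T A \<subseteq> E" unfolding T_def using tp_sub dE by blast

lemma weak:
  assumes I: "cis I" and A: "A \<subseteq> V"
  shows "card (V - Sx I) \<le> g A"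
proof -
  let ?N = "V - Sx I"
  have fV: "finite V" by (rule finV)
  have "card ?N \<le> card (?N \<inter> A) + card (?N - A)"
    using card_Un_le[of "?N \<inter> A" "?N - A"] by (metis Int_Diff_Un)
  moreover have "card (?N \<inter> A) \<le> card A" by (rule card_mono) (use A fV finite_subset in auto)
  moreover have "card (?N - A) = card (I \<inter> \<Union>(\<delta> ` (?N - A)))"
    by (rule card_elts[OF I, symmetric]) (use nonS_cov[OF I] in auto)
  moreover have "card (I \<inter> \<Union>(\<delta> ` (?N - A))) \<le> rk (T (V - A))"
  proof (rule rk_ge)
    show "I \<inter> \<Union>(\<delta> ` (?N - A)) \<subseteq> T (V - A)" unfolding T_def using nonS_tp[OF I] by blast
    show "I \<inter> \<Union>(\<delta> ` (?N - A)) \<in> Ind" using ind_sub cis_ind[OF I] by blast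
  qed
  ultimately show ?thesis unfolding g_def by linarith
qed

lemma pop_tight:
  assumes I: "cis I" and pop: "popular Ind V \<delta> pref I"
  shows "g (V - R I) \<le> card (V - Sx I)"
proof -
  have RV: "R I \<subseteq> V" by (rule R_V)
  have SR: "Sx I \<subseteq> R I" by (rule S_R)
  have IInd: "I \<in> Ind" using I cis_ind by blast
  have ZI: "Z I \<in> Ind" unfolding Z_def using ind_sub[OF IInd] by blast
  have TR: "T (R I) \<subseteq> cl (Z I)"
  proof
    fix e assume "e \<in> T (R I)"
    then obtain w where w: "w \<in> R I" "e \<in> tp w" unfolding T_def by blast
    have wV: "w \<in> V" using w RV by blast
    show "e \<in> cl (Z I)"
    proof (cases "e \<in> I")
      case True
      have "w \<notin> Sx I" using w True unfolding Sx_def using tp_sub by blast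
      then have "e \<in> Z I" unfolding Z_def using True w tp_sub by blast
      moreover have "e \<in> E" using w tp_sub dE[OF wV] by blast
      ultimately show ?thesis using cl_sub by blast
    next
      case False
      then have "e \<in> mv I w" using tp_mv[OF I wV] w by blast
      then show ?thesis by (rule key[OF I pop w(1)])
    qed
  qed
  obtain K where K: "K \<subseteq> T (R I)" "K \<in> Ind" "card K = rk (T (R I))" using rk_obtain by blast
  have "card K \<le> rk (Z I)" by (rule rk_cl_le) (use K TR in auto)
  then have r1: "rk (T (R I)) \<le> card (Z I)" using K rk_ind[OF ZI] by simp
  have "card (Z I) = card (R I - Sx I)" unfolding Z_def
    by (rule card_elts[OF I]) (use RV nonS_cov[OF I] in auto)
  moreover have "V - (V - R I) = R I" using RV by blast
  moreover have "card (V - Sx I) = card (V - R I) + card (R I - Sx I)"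
  proof -
    have "V - Sx I = (V - R I) \<union> (R I - Sx I)" using RV SR by blast
    moreover have "(V - R I) \<inter> (R I - Sx I) = {}" by blast
    moreover have "finite (V - R I)" "finite (R I - Sx I)" using finV RV finite_subset by auto
    ultimately show ?thesis using card_Un_disjoint[of "V - R I" "R I - Sx I"] by simp
  qed
  ultimately show ?thesis unfolding g_def using r1 by simp
qed

end

context popl begin

definition gmin :: nat where "gmin = Min (g ` Pow V)"

lemma gmin_le: "A \<subseteq> V \<Longrightarrow> gmin \<le> g A"
  unfolding gmin_def by (rule Min_le) (use finV in auto)

lemma gmin_ex: "\<exists>A. A \<subseteq> V \<and> g A = gmin"
proof -
  have "gmin \<in> g ` Pow V" unfolding gmin_def by (rule Min_in) (use finV in auto)
  then show ?thesis by auto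
qed

definition Ast :: "'v set" where
  "Ast = (SOME A. A \<subseteq> V \<and> g A = gmin \<and> (\<forall>B. B \<subseteq> V \<and> g B = gmin \<longrightarrow> card A \<le> card B))"

lemma Ast: "Ast \<subseteq> V \<and> g Ast = gmin \<and> (\<forall>B. B \<subseteq> V \<and> g B = gmin \<longrightarrow> card Ast \<le> card B)"
proof -
  obtain A0 where A0: "A0 \<subseteq> V \<and> g A0 = gmin" using gmin_ex by blast
  obtain A where "A \<subseteq> V \<and> g A = gmin" "\<forall>B. B \<subseteq> V \<and> g B = gmin \<longrightarrow> card A \<le> card B"
    using ex_has_least_nat[of "\<lambda>A. A \<subseteq> V \<and> g A = gmin" A0 card] A0 by blast
  then have "\<exists>A. A \<subseteq> V \<and> g A = gmin \<and> (\<forall>B. B \<subseteq> V \<and> g B = gmin \<longrightarrow> card A \<le> card B)" by blast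
  then show ?thesis unfolding Ast_def by (rule someI_ex)
qed

lemma T_union: "T (A \<union> B) = T A \<union> T B" unfolding T_def by auto

lemma g_submod:
  assumes A: "A \<subseteq> V" and B: "B \<subseteq> V"
  shows "g (A \<inter> B) + g (A \<union> B) \<le> g A + g B"
proof -
  have fA: "finite A" "finite B" using A B finV finite_subset by auto
  have c: "card (A \<inter> B) + card (A \<union> B) = card A + card B" using card_Un_Int[OF fA] by simp
  have e1: "T (V - (A \<inter> B)) = T (V - A) \<union> T (V - B)"
    by (metis Diff_Int T_union)
  have e2: "T (V - (A \<union> B)) \<subseteq> T (V - A) \<inter> T (V - B)" unfolding T_def by auto
  have "rk (T (V - (A \<inter> B))) + rk (T (V - (A \<union> B))) \<le> rk (T (V - A) \<union> T (V - B)) + rk (T (V - A) \<inter> T (V - B))"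
    using rk_mono[OF e2] e1 by simp
  also have "\<dots> \<le> rk (T (V - A)) + rk (T (V - B))" by (rule rk_submod)
  finally show ?thesis unfolding g_def using c by simp
qed

lemma Ast_sub:
  assumes B: "B \<subseteq> V" "g B = gmin"
  shows "Ast \<subseteq> B"
proof -
  have A: "Ast \<subseteq> V" "g Ast = gmin" using Ast by auto
  have "g (Ast \<inter> B) + g (Ast \<union> B) \<le> g Ast + g B" by (rule g_submod[OF A(1) B(1)])
  moreover have "gmin \<le> g (Ast \<union> B)" using gmin_le A B by blast
  moreover have "gmin \<le> g (Ast \<inter> B)" using gmin_le A B by blast
  ultimately have "g (Ast \<inter> B) = gmin" using A B by linarith
  then have "card Ast \<le> card (Ast \<inter> B)" using Ast A B by blast
  moreover have "finite Ast" using A finV finite_subset by blast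
  ultimately have "Ast \<inter> B = Ast" by (metis Int_lower1 card_seteq finite_Int)
  then show ?thesis by blast
qed

definition C :: "'a set" where "C = cl (T (V - Ast))"

definition cert :: "'a set \<Rightarrow> bool" where
  "cert J \<longleftrightarrow> cis J \<and> (\<forall>K. K \<in> Ind \<longrightarrow> K \<subseteq> C \<longrightarrow> card K \<le> card (J \<inter> C))
     \<and> (\<forall>v\<in>V. \<forall>e\<in>J \<inter> \<delta> v. e \<in> C \<longrightarrow> e \<in> tp v \<and> tp v \<subseteq> C)
     \<and> (\<forall>v\<in>Sx J. bet J v \<subseteq> C)"

lemma T_C: "T (V - Ast) \<subseteq> C" unfolding C_def using cl_sub T_E[of "V - Ast"] by blast

lemma pop_cert:
  assumes I: "cis I" and pop: "popular Ind V \<delta> pref I"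
  shows "cert I"
proof -
  have IInd: "I \<in> Ind" using I cis_ind by blast
  have RV: "R I \<subseteq> V" by (rule R_V)
  have m1: "g (V - R I) = gmin"
    using pop_tight[OF I pop] weak[OF I] gmin_le gmin_ex by (metis Diff_subset le_antisym order_trans)
  have AR: "Ast \<subseteq> V - R I" by (rule Ast_sub) (use m1 in auto)
  have RA: "R I \<subseteq> V - Ast" using AR RV by blast
  have cN: "card (V - Sx I) = gmin"
    using pop_tight[OF I pop] weak[OF I] m1 gmin_ex by (metis le_antisym)
  have S3: "\<forall>v\<in>Sx I. bet I v \<subseteq> C"
  proof (intro ballI subsetI)
    fix v e assume v: "v \<in> Sx I" and e: "e \<in> bet I v"
    have "e \<in> mv I v" using v e unfolding mv_def by simp
    then have "e \<in> cl (Z I)" using key[OF I pop] S_R v by blast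
    moreover have "Z I \<subseteq> T (V - Ast)" using Z_tp[OF I] RA unfolding T_def by blast
    then have "cl (Z I) \<subseteq> C" unfolding C_def by (rule cl_mono)
    ultimately show "e \<in> C" by blast
  qed
  let ?N = "V - Sx I"
  define P where "P = I \<inter> \<Union>(\<delta> ` (?N - Ast))"
  have Ast: "Ast \<subseteq> V" "g Ast = gmin" using Ast by auto
  have fV: "finite V" by (rule finV)
  have cP: "card P = card (?N - Ast)" unfolding P_def
    by (rule card_elts[OF I]) (use nonS_cov[OF I] in auto)
  have PT: "P \<subseteq> T (V - Ast)" unfolding P_def T_def using nonS_tp[OF I] by blast
  have PI: "P \<in> Ind" unfolding P_def using ind_sub[OF IInd] by blast
  have Prk: "card P \<le> rk (T (V - Ast))" by (rule rk_ge[OF PT PI])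
  have "card ?N \<le> card (?N \<inter> Ast) + card (?N - Ast)"
    using card_Un_le[of "?N \<inter> Ast" "?N - Ast"] by (metis Int_Diff_Un)
  moreover have "card (?N \<inter> Ast) \<le> card Ast" by (rule card_mono) (use Ast fV finite_subset in auto)
  ultimately have Peq: "card P = rk (T (V - Ast))" using cN Ast Prk cP unfolding g_def by linarith
  have PC: "P \<subseteq> I \<inter> C" using PT T_C P_def by blast
  have S1: "\<forall>K. K \<in> Ind \<longrightarrow> K \<subseteq> C \<longrightarrow> card K \<le> card (I \<inter> C)"
  proof (intro allI impI)
    fix K assume K: "K \<in> Ind" "K \<subseteq> C"
    have "card K \<le> rk (T (V - Ast))" by (rule rk_cl_le) (use K C_def in auto)
    also have "\<dots> = card P" using Peq by simp
    also have "\<dots> \<le> card (I \<inter> C)" by (rule card_mono) (use PC ind_fin[OF IInd] in auto)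
    finally show "card K \<le> card (I \<inter> C)" .
  qed
  have S2: "\<forall>v\<in>V. \<forall>e\<in>I \<inter> \<delta> v. e \<in> C \<longrightarrow> e \<in> tp v \<and> tp v \<subseteq> C"
  proof (intro ballI impI)
    fix v e assume v: "v \<in> V" and e: "e \<in> I \<inter> \<delta> v" and eC: "e \<in> C"
    have eP: "e \<in> P"
    proof (rule ccontr)
      assume nP: "e \<notin> P"
      have "insert e P \<subseteq> I" using PC e by blast
      then have iI: "insert e P \<in> Ind" using ind_sub[OF IInd] by blast
      have "card (insert e P) \<le> rk (T (V - Ast))" by (rule rk_cl_le) (use iI PC eC C_def in auto)
      moreover have "card (insert e P) = Suc (card P)" using nP ind_fin[OF PI] by simp
      ultimately show False using Peq by simp
    qed
    then obtain w where w: "w \<in> ?N - Ast" "e \<in> \<delta> w" unfolding P_def by blast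
    have "w = v" using disj[of w v e] w v e by blast
    then have vN: "v \<in> ?N" "v \<notin> Ast" using w by auto
    have "e \<in> tp v" using nonS_tp[OF I v] vN e by blast
    moreover have "tp v \<subseteq> C" using T_C vN v unfolding T_def by blast
    ultimately show "e \<in> tp v \<and> tp v \<subseteq> C" by simp
  qed
  show ?thesis unfolding cert_def using I S1 S2 S3 by blast
qed


lemma cert_pop:
  assumes c: "cert J"
  shows "popular Ind V \<delta> pref J"
proof -
  have J: "cis J" and S1: "\<forall>K. K \<in> Ind \<longrightarrow> K \<subseteq> C \<longrightarrow> card K \<le> card (J \<inter> C)"
    and S2: "\<forall>v\<in>V. \<forall>e\<in>J \<inter> \<delta> v. e \<in> C \<longrightarrow> e \<in> tp v \<and> tp v \<subseteq> C"
    and S3: "\<forall>v\<in>Sx J. bet J v \<subseteq> C" using c unfolding cert_def by auto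
  have JInd: "J \<in> Ind" using J cis_ind by blast
  have fV: "finite V" by (rule finV)
  have "phi V \<delta> pref J J' \<ge> phi V \<delta> pref J' J" if J': "cis J'" for J'
  proof -
    have J'Ind: "J' \<in> Ind" using J' cis_ind by blast
    define Ap where "Ap = {v \<in> V. prefers \<delta> pref v J' J}"
    define B where "B = {v \<in> V. J \<inter> \<delta> v \<inter> C \<noteq> {}}"
    define B' where "B' = {b \<in> B. J' \<inter> \<delta> b \<inter> C \<noteq> {}}"
    have fin: "finite Ap" "finite B" "finite B'" unfolding Ap_def B_def B'_def using fV by auto
    have Aprop: "J' \<inter> \<delta> a \<inter> C \<noteq> {} \<and> a \<notin> B" if a: "a \<in> Ap" for a
    proof -
      have aV: "a \<in> V" and p: "prefers \<delta> pref a J' J" using a unfolding Ap_def by auto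
      show ?thesis
      proof (cases "J \<inter> \<delta> a = {}")
        case True
        then obtain e' where e': "e' \<in> J' \<inter> \<delta> a" using p unfolding prefers_def by blast
        have aS: "a \<in> Sx J" using True aV unfolding Sx_def by auto
        have "e' \<in> bet J a" unfolding bet_def using e' True nl_ind[OF J'Ind] by blast
        then have "e' \<in> C" using S3 aS by blast
        moreover have "a \<notin> B" using True unfolding B_def by blast
        ultimately show ?thesis using e' by blast
      next
        case False
        then obtain x e' where xe: "J \<inter> \<delta> a = {x}" "J' \<inter> \<delta> a = {e'}" "pref a e' x"
          using p unfolding prefers_def by blast
        have e'd: "e' \<in> \<delta> a" "nl e'" using xe(2) nl_ind[OF J'Ind] by auto
        have xt: "x \<notin> tp a" using tp_nopref[of x a e'] e'd xe(3) by blast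
        then have aS: "a \<in> Sx J" using xe(1) aV unfolding Sx_def by auto
        have "e' \<in> bet J a" unfolding bet_def using e'd xe by auto
        then have "e' \<in> C" using S3 aS by blast
        moreover have "a \<notin> B"
        proof
          assume "a \<in> B"
          then have "J \<inter> \<delta> a \<inter> C \<noteq> {}" unfolding B_def by blast
          then have "x \<in> C" using xe(1) by auto
          then have "x \<in> tp a" using S2 aV xe(1) by blast
          then show False using xt by simp
        qed
        ultimately show ?thesis using xe(2) by blast
      qed
    qed
    have ApB: "Ap \<inter> B' = {}" using Aprop unfolding B'_def by blast
    have inC: "elt J' w \<in> J' \<inter> C" if w: "w \<in> Ap \<union> B'" for w
    proof -
      have wV: "w \<in> V" using w unfolding Ap_def B'_def B_def by blast
      have ne: "J' \<inter> \<delta> w \<inter> C \<noteq> {}" using w Aprop unfolding B'_def by blast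
      then obtain e where e: "e \<in> J' \<inter> \<delta> w" "e \<in> C" by blast
      have "elt J' w = e" using elt_uniq[OF J' wV e(1)] .
      then show ?thesis using e by blast
    qed
    have inj: "inj_on (elt J') (Ap \<union> B')"
      unfolding inj_on_def
    proof (intro ballI impI)
      fix a b assume ab: "a \<in> Ap \<union> B'" "b \<in> Ap \<union> B'" "elt J' a = elt J' b"
      have V: "a \<in> V" "b \<in> V" using ab unfolding Ap_def B'_def B_def by auto
      have "J' \<inter> \<delta> a \<noteq> {}" "J' \<inter> \<delta> b \<noteq> {}" using ab Aprop unfolding B'_def by blast+
      then show "a = b" using elt_inj[OF J' V] ab(3) by blast
    qed
    have "card (Ap \<union> B') \<le> card (J' \<inter> C)"
      by (rule card_inj_on_le[OF inj]) (use inC ind_fin[OF J'Ind] in auto)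
    also have "\<dots> \<le> card (J \<inter> C)" using S1 ind_sub[OF J'Ind] by blast
    also have "\<dots> = card B"
    proof -
      have eq: "J \<inter> C = J \<inter> \<Union>(\<delta> ` B)"
      proof
        show "J \<inter> C \<subseteq> J \<inter> \<Union>(\<delta> ` B)"
        proof
          fix e assume e: "e \<in> J \<inter> C"
          then obtain v where "v \<in> V" "e \<in> \<delta> v" using owner indE[OF JInd] by blast
          then show "e \<in> J \<inter> \<Union>(\<delta> ` B)" using e unfolding B_def by blast
        qed
        show "J \<inter> \<Union>(\<delta> ` B) \<subseteq> J \<inter> C"
        proof
          fix e assume "e \<in> J \<inter> \<Union>(\<delta> ` B)"
          then obtain b where b: "b \<in> B" "e \<in> J \<inter> \<delta> b" by blast
          then obtain e' where e': "e' \<in> J \<inter> \<delta> b" "e' \<in> C" unfolding B_def by blast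
          have "b \<in> V" using b unfolding B_def by blast
          then have "J \<inter> \<delta> b = {e'}" using cis_single[OF J] e' by blast
          then have "e = e'" using b(2) by auto
          then show "e \<in> J \<inter> C" using e' by auto
        qed
      qed
      have "card (J \<inter> \<Union>(\<delta> ` B)) = card B"
        by (rule card_elts[OF J]) (auto simp: B_def)
      then show ?thesis using eq by simp
    qed
    finally have c1: "card (Ap \<union> B') \<le> card B" .
    have "card (Ap \<union> B') = card Ap + card B'" using card_Un_disjoint[OF fin(1,3) ApB] .
    moreover have "card B = card B' + card (B - B')"
      using card_Diff_subset[of B' B] card_mono[of B B'] fin unfolding B'_def by auto
    ultimately have c2: "card Ap \<le> card (B - B')" using c1 by simp
    have "B - B' \<subseteq> {v \<in> V. prefers \<delta> pref v J J'}"
    proof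
      fix b assume b: "b \<in> B - B'"
      have bV: "b \<in> V" using b unfolding B_def by blast
      obtain x where x: "x \<in> J \<inter> \<delta> b" "x \<in> C" using b unfolding B_def by blast
      have Jb: "J \<inter> \<delta> b = {x}" using cis_single[OF J bV x(1)] .
      have xt: "x \<in> tp b" "tp b \<subseteq> C" using S2 bV x by blast+
      have n: "J' \<inter> \<delta> b \<inter> C = {}" using b unfolding B'_def by blast
      show "b \<in> {v \<in> V. prefers \<delta> pref v J J'}"
      proof (cases "J' \<inter> \<delta> b = {}")
        case True then show ?thesis using bV Jb unfolding prefers_def by auto
      next
        case False
        then obtain e' where e': "e' \<in> J' \<inter> \<delta> b" by blast
        have J'b: "J' \<inter> \<delta> b = {e'}" using cis_single[OF J' bV e'] .
        have "e' \<notin> C" using n e' by blast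
        then have "e' \<notin> tp b" using xt by blast
        moreover have "nl e'" using nl_ind[OF J'Ind] e' by blast
        ultimately have "pref b x e'" using tp_dom[OF bV xt(1)] e' by blast
        then show ?thesis using bV Jb J'b unfolding prefers_def by auto
      qed
    qed
    then have "card (B - B') \<le> phi V \<delta> pref J J'" unfolding phi_def by (rule card_mono[rotated]) (use fV in auto)
    moreover have "phi V \<delta> pref J' J = card Ap" unfolding phi_def Ap_def by simp
    ultimately show ?thesis using c2 by linarith
  qed
  then show ?thesis unfolding popular_def using J cis_eq by simp
qed

lemma pop_iff_cert: "popular Ind V \<delta> pref J \<longleftrightarrow> cert J"
proof
  assume p: "popular Ind V \<delta> pref J"
  then have "cis J" unfolding popular_def using cis_eq by simp
  then show "cert J" using pop_cert p by blast
next
  assume "cert J" then show "popular Ind V \<delta> pref J" by (rule cert_pop)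
qed

end

context popl begin

definition PB :: "'v \<Rightarrow> ('a + 'v) set" where "PB v = Inl ` \<delta> v \<union> {Inr v}"
definition blk :: "'a + 'v \<Rightarrow> 'v" where
  "blk x = (case x of Inl a \<Rightarrow> (SOME v. v \<in> V \<and> a \<in> \<delta> v) | Inr v \<Rightarrow> v)"

abbreviation "G \<equiv> ext_ground E V"

lemma G_fin: "finite G" unfolding ext_ground_def using finE finV by simp

lemma blk_in: assumes "x \<in> G" shows "blk x \<in> V \<and> x \<in> PB (blk x)"
proof (cases x)
  case (Inl a)
  then have a: "a \<in> E" using assms unfolding ext_ground_def by auto
  then have "\<exists>v. v \<in> V \<and> a \<in> \<delta> v" using owner by blast
  then have "(SOME v. v \<in> V \<and> a \<in> \<delta> v) \<in> V \<and> a \<in> \<delta> (SOME v. v \<in> V \<and> a \<in> \<delta> v)" by (rule someI_ex)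
  then show ?thesis using Inl unfolding blk_def PB_def by auto
next
  case (Inr v)
  then show ?thesis using assms unfolding blk_def PB_def ext_ground_def by auto
qed

lemma blk_uniq: assumes w: "w \<in> V" and x: "x \<in> PB w" shows "blk x = w"
proof (cases x)
  case (Inl a)
  then have a: "a \<in> \<delta> w" using x unfolding PB_def by auto
  then have "\<exists>v. v \<in> V \<and> a \<in> \<delta> v" using w by blast
  then have s: "(SOME v. v \<in> V \<and> a \<in> \<delta> v) \<in> V \<and> a \<in> \<delta> (SOME v. v \<in> V \<and> a \<in> \<delta> v)" by (rule someI_ex)
  then have "(SOME v. v \<in> V \<and> a \<in> \<delta> v) = w" using disj[OF _ w] a by blast
  then show ?thesis using Inl unfolding blk_def by simp
next
  case (Inr v)
  then show ?thesis using x unfolding blk_def PB_def by auto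
qed

lemma PI_eq: "partition_indep E V \<delta> = {X. X \<subseteq> G \<and> (\<forall>v\<in>V. card (X \<inter> PB v) \<le> 1)}"
  unfolding partition_indep_def PB_def by simp

lemma PI_inj: assumes X: "X \<in> partition_indep E V \<delta>" shows "inj_on blk X"
  unfolding inj_on_def
proof (intro ballI impI)
  fix x y assume xy: "x \<in> X" "y \<in> X" "blk x = blk y"
  have XG: "X \<subseteq> G" and c: "\<forall>v\<in>V. card (X \<inter> PB v) \<le> 1" using X unfolding PI_eq by auto
  have w: "blk x \<in> V" "x \<in> PB (blk x)" "y \<in> PB (blk x)" using blk_in xy XG by (metis subsetD)+
  have fin: "finite (X \<inter> PB (blk x))" using XG G_fin finite_subset by blast
  have "X \<inter> PB (blk x) = {x}" by (rule card1_single[OF fin]) (use c w xy in auto)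
  moreover have "y \<in> X \<inter> PB (blk x)" using w xy by blast
  ultimately show "x = y" by simp
qed

lemma PI_card: assumes X: "X \<in> partition_indep E V \<delta>" shows "card X \<le> card V"
proof -
  have XG: "X \<subseteq> G" using X unfolding PI_eq by auto
  have "card X = card (blk ` X)" using card_image[OF PI_inj[OF X]] by simp
  also have "\<dots> \<le> card V" by (rule card_mono[OF finV]) (use blk_in XG in blast)
  finally show ?thesis .
qed

lemma matroid_P: "matroid G (partition_indep E V \<delta>)"
  unfolding matroid_def
proof (intro conjI allI ballI impI)
  show "finite G" by (rule G_fin)
  show "I \<subseteq> G" if "I \<in> partition_indep E V \<delta>" for I using that unfolding PI_eq by auto
  show "{} \<in> partition_indep E V \<delta>" unfolding PI_eq by simp
  fix I J
  show "I \<in> partition_indep E V \<delta>" if "J \<in> partition_indep E V \<delta>" "I \<subseteq> J"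
  proof -
    have JG: "J \<subseteq> G" and c: "\<forall>v\<in>V. card (J \<inter> PB v) \<le> 1" using that(1) unfolding PI_eq by auto
    have "card (I \<inter> PB v) \<le> 1" if v: "v \<in> V" for v
    proof -
      have "card (I \<inter> PB v) \<le> card (J \<inter> PB v)"
        by (rule card_mono) (use JG G_fin finite_subset \<open>I \<subseteq> J\<close> in auto)
      moreover have "card (J \<inter> PB v) \<le> 1" using c v by blast
      ultimately show ?thesis by linarith
    qed
    then show ?thesis unfolding PI_eq using JG \<open>I \<subseteq> J\<close> by auto
  qed
  assume I: "I \<in> partition_indep E V \<delta>" and J: "J \<in> partition_indep E V \<delta>" and lt: "card I < card J"
  have IG: "I \<subseteq> G" and cI: "\<forall>v\<in>V. card (I \<inter> PB v) \<le> 1" using I unfolding PI_eq by auto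
  have JG: "J \<subseteq> G" using J unfolding PI_eq by auto
  have "\<not> blk ` J \<subseteq> blk ` I"
  proof
    assume "blk ` J \<subseteq> blk ` I"
    then have "card (blk ` J) \<le> card (blk ` I)" by (rule card_mono[rotated]) (use IG G_fin finite_subset in blast)
    then show False using lt card_image[OF PI_inj[OF I]] card_image[OF PI_inj[OF J]] by simp
  qed
  then obtain e where e: "e \<in> J" "blk e \<notin> blk ` I" by blast
  have eI: "e \<notin> I" using e by blast
  have eG: "e \<in> G" using e JG by blast
  have "card (insert e I \<inter> PB v) \<le> 1" if v: "v \<in> V" for v
  proof (cases "blk e = v")
    case True
    have "I \<inter> PB v = {}"
    proof (rule ccontr)
      assume "I \<inter> PB v \<noteq> {}"
      then obtain x where "x \<in> I" "x \<in> PB v" by blast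
      then have "blk x = v" using blk_uniq[OF v] by blast
      then show False using e True \<open>x \<in> I\<close> by blast
    qed
    then have "insert e I \<inter> PB v \<subseteq> {e}" by blast
    then show ?thesis using card_mono[of "{e}" "insert e I \<inter> PB v"] by simp
  next
    case False
    then have "e \<notin> PB v" using blk_uniq[OF v] by blast
    then have "insert e I \<inter> PB v = I \<inter> PB v" by blast
    then show ?thesis using cI v by simp
  qed
  then have "insert e I \<in> partition_indep E V \<delta>" unfolding PI_eq using IG eG by auto
  then show "\<exists>e\<in>J - I. insert e I \<in> partition_indep E V \<delta>" using e eI by blast
qed

lemma card_split:
  fixes X :: "('b + 'c) set"
  assumes "finite X"
  shows "card X = card {a. Inl a \<in> X} + card {v. Inr v \<in> X}"
proof -
  define A where "A = {a. Inl a \<in> X}"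
  define B where "B = {v. Inr v \<in> X}"
  have f1: "finite A" unfolding A_def using finite_vimageI[OF assms, of Inl] by (simp add: vimage_def)
  have f2: "finite B" unfolding B_def using finite_vimageI[OF assms, of Inr] by (simp add: vimage_def)
  have eq: "X = (Inl ` A \<union> Inr ` B :: ('b + 'c) set)"
  proof
    show "X \<subseteq> Inl ` A \<union> Inr ` B"
    proof
      fix x assume "x \<in> X" then show "x \<in> Inl ` A \<union> Inr ` B" unfolding A_def B_def by (cases x) auto
    qed
  qed (auto simp: A_def B_def)
  have g1: "finite (Inl ` A :: ('b + 'c) set)" using f1 by simp
  have g2: "finite (Inr ` B :: ('b + 'c) set)" using f2 by simp
  have g3: "(Inl ` A :: ('b + 'c) set) \<inter> Inr ` B = {}" by auto
  have "card X = card (Inl ` A :: ('b + 'c) set) + card (Inr ` B :: ('b + 'c) set)"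
    using card_Un_disjoint[OF g1 g2 g3] eq by simp
  also have "\<dots> = card A + card B" by (simp add: card_image)
  finally show ?thesis unfolding A_def B_def .
qed

lemma matroid_M': "matroid G (ext_indep E V Ind)"
  unfolding matroid_def
proof (intro conjI allI ballI impI)
  show "finite G" by (rule G_fin)
  show "I \<subseteq> G" if "I \<in> ext_indep E V Ind" for I using that unfolding ext_indep_def by auto
  show "{} \<in> ext_indep E V Ind" unfolding ext_indep_def using ind_empty by simp
  fix I J
  show "I \<in> ext_indep E V Ind" if "J \<in> ext_indep E V Ind" "I \<subseteq> J"
  proof -
    have JG: "J \<subseteq> G" and JA: "{a. Inl a \<in> J} \<in> Ind" and cJ: "card J \<le> card V"
      using that(1) unfolding ext_indep_def by auto
    have "{a. Inl a \<in> I} \<in> Ind" by (rule ind_sub[OF JA]) (use that(2) in auto)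
    moreover have "card I \<le> card J" by (rule card_mono) (use JG G_fin finite_subset that(2) in auto)
    ultimately show ?thesis unfolding ext_indep_def using JG that(2) cJ by auto
  qed
  assume I: "I \<in> ext_indep E V Ind" and J: "J \<in> ext_indep E V Ind" and lt: "card I < card J"
  have IG: "I \<subseteq> G" and IA: "{a. Inl a \<in> I} \<in> Ind" using I unfolding ext_indep_def by auto
  have JG: "J \<subseteq> G" and JA: "{a. Inl a \<in> J} \<in> Ind" and cJ: "card J \<le> card V"
    using J unfolding ext_indep_def by auto
  have fI: "finite I" "finite J" using IG JG G_fin finite_subset by auto
  show "\<exists>e\<in>J - I. insert e I \<in> ext_indep E V Ind"
  proof (cases "card {a. Inl a \<in> I} < card {a. Inl a \<in> J}")
    case True
    obtain a where a: "a \<in> {a. Inl a \<in> J} - {a. Inl a \<in> I}" "insert a {a. Inl a \<in> I} \<in> Ind"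
      using ind_aug[OF IA JA True] by blast
    have "{b. Inl b \<in> insert (Inl a) I} = insert a {a. Inl a \<in> I}" by auto
    moreover have "card (insert (Inl a) I) \<le> card V" using a fI lt cJ by simp
    moreover have "insert (Inl a) I \<subseteq> G" using a IG JG by auto
    ultimately have "insert (Inl a) I \<in> ext_indep E V Ind" unfolding ext_indep_def using a by auto
    then show ?thesis using a by blast
  next
    case False
    have "card I = card {a. Inl a \<in> I} + card {v. Inr v \<in> I}" by (rule card_split[OF fI(1)])
    moreover have "card J = card {a. Inl a \<in> J} + card {v. Inr v \<in> J}" by (rule card_split[OF fI(2)])
    ultimately have clt: "card {v. Inr v \<in> I} < card {v. Inr v \<in> J}" using lt False by linarith
    have fJ: "finite {v. Inr v \<in> I}" using finite_vimageI[OF fI(1), of Inr] by (simp add: vimage_def)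
    have "\<not> {v. Inr v \<in> J} \<subseteq> {v. Inr v \<in> I}"
    proof
      assume "{v. Inr v \<in> J} \<subseteq> {v. Inr v \<in> I}"
      then have "card {v. Inr v \<in> J} \<le> card {v. Inr v \<in> I}" by (rule card_mono[OF fJ])
      then show False using clt by simp
    qed
    then obtain v where v: "Inr v \<in> J" "Inr v \<notin> I" by blast
    have "{b. Inl b \<in> insert (Inr v) I} = {a. Inl a \<in> I}" by auto
    moreover have "card (insert (Inr v) I) \<le> card V" using v fI lt cJ by simp
    moreover have "insert (Inr v) I \<subseteq> G" using v IG JG by auto
    ultimately have "insert (Inr v) I \<in> ext_indep E V Ind" unfolding ext_indep_def using IA by auto
    then show ?thesis using v by blast
  qed
qed

end

locale popf = popl E Ind V \<delta> pref
  for E :: "('a::finite) set" and Ind and V :: "('v::finite) set" and \<delta> and pref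
begin

definition hh :: "'a + 'v \<Rightarrow> real" where "hh x = (case x of Inl e \<Rightarrow> of_bool (e \<in> C) | Inr v \<Rightarrow> 0)"
definition allowed :: "'a + 'v \<Rightarrow> bool" where
  "allowed x = (case x of Inl e \<Rightarrow> (\<forall>v\<in>V. e \<in> \<delta> v \<longrightarrow> (e \<in> C \<longrightarrow> e \<in> tp v \<and> tp v \<subseteq> C) \<and>
        (e \<notin> tp v \<longrightarrow> {g \<in> \<delta> v. nl g \<and> pref v g e} \<subseteq> C))
     | Inr v \<Rightarrow> {g \<in> \<delta> v. nl g} \<subseteq> C)"
definition base :: "'a + 'v \<Rightarrow> real" where "base x = (if allowed x then hh x else -1)"
definition wv :: "real ^ ('a + 'v)" where "wv = (\<chi> x. 1 + base x)"

definition c0 :: nat where "c0 = Max {card K | K. K \<in> Ind \<and> K \<subseteq> C}"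

abbreviation "Pts \<equiv> partition_indep E V \<delta> \<inter> ext_indep E V Ind"

lemma inner_inc: fixes X :: "('a + 'v) set" shows "wv \<bullet> incidence X = real (card X) + (\<Sum>x\<in>X. base x)"
proof -
  have "wv \<bullet> incidence X = (\<Sum>i\<in>UNIV. (1 + base i) * (if i \<in> X then 1 else 0))"
    unfolding inner_vec_def wv_def incidence_def by simp
  also have "\<dots> = (\<Sum>i\<in>UNIV. if i \<in> X then 1 + base i else 0)" by (rule sum.cong) auto
  also have "\<dots> = (\<Sum>i\<in>UNIV \<inter> X. 1 + base i)" by (rule sum.inter_restrict[symmetric]) simp
  also have "\<dots> = real (card X) + (\<Sum>x\<in>X. base x)" by (simp add: sum.distrib)
  finally show ?thesis .
qed

lemma hh_sum: fixes X :: "('a + 'v) set" shows "(\<Sum>x\<in>X. hh x) = real (card ({e. Inl e \<in> X} \<inter> C))"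
proof -
  have "hh x = of_bool (x \<in> Inl ` C)" for x unfolding hh_def by (cases x) auto
  then have "(\<Sum>x\<in>X. hh x) = (\<Sum>x\<in>X. of_bool (x \<in> Inl ` C))" by simp
  also have "\<dots> = real (card (X \<inter> {x. x \<in> Inl ` C}))" using sum_of_bool_eq[of X "\<lambda>x. x \<in> Inl ` C"] by simp
  also have "X \<inter> {x. x \<in> Inl ` C} = Inl ` ({e. Inl e \<in> X} \<inter> C)" by auto
  also have "card \<dots> = card ({e. Inl e \<in> X} \<inter> C)" by (rule card_image) simp
  finally show ?thesis .
qed

lemma base_le: fixes X :: "('a + 'v) set" shows "(\<Sum>x\<in>X. base x) \<le> (\<Sum>x\<in>X. hh x) - real (card {x\<in>X. \<not> allowed x})"
proof -
  have "(\<Sum>x\<in>X. base x) \<le> (\<Sum>x\<in>X. hh x - of_bool (\<not> allowed x))"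
    by (rule sum_mono) (auto simp: base_def hh_def split: sum.splits)
  also have "\<dots> = (\<Sum>x\<in>X. hh x) - (\<Sum>x\<in>X. of_bool (\<not> allowed x))" by (rule sum_subtractf)
  also have "(\<Sum>x\<in>X. (of_bool (\<not> allowed x) :: real)) = real (card (X \<inter> {x. \<not> allowed x}))"
    using sum_of_bool_eq[of X "\<lambda>x. \<not> allowed x"] by simp
  also have "X \<inter> {x. \<not> allowed x} = {x\<in>X. \<not> allowed x}" by auto
  finally show ?thesis .
qed

lemma base_eq: fixes X :: "('a + 'v) set" shows "\<forall>x\<in>X. allowed x \<Longrightarrow> (\<Sum>x\<in>X. base x) = (\<Sum>x\<in>X. hh x)"
  unfolding base_def by (rule sum.cong) auto

lemma c0_fin: "finite {card K | K. K \<in> Ind \<and> K \<subseteq> C}"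
proof -
  have "{card K | K. K \<in> Ind \<and> K \<subseteq> C} \<subseteq> card ` Pow E" using indE by auto
  then show ?thesis using finite_subset finE by blast
qed

lemma c0_ge: "K \<in> Ind \<Longrightarrow> K \<subseteq> C \<Longrightarrow> card K \<le> c0"
  unfolding c0_def by (rule Max_ge[OF c0_fin]) blast

lemma cert_c0: assumes "cert J" shows "card (J \<inter> C) = c0"
proof -
  have J: "J \<in> Ind" using assms cis_ind unfolding cert_def by blast
  have "c0 \<in> {card K | K. K \<in> Ind \<and> K \<subseteq> C}" unfolding c0_def
    by (rule Max_in[OF c0_fin]) (use ind_empty in blast)
  then obtain K where K: "K \<in> Ind" "K \<subseteq> C" "card K = c0" by auto
  have "card K \<le> card (J \<inter> C)" using assms K unfolding cert_def by blast
  moreover have "card (J \<inter> C) \<le> c0" by (rule c0_ge) (use ind_sub[OF J] in auto)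
  ultimately show ?thesis using K by simp
qed

lemma Pts_cis: assumes X: "X \<in> Pts" shows "cis {e. Inl e \<in> X}"
  unfolding cis_def
proof (intro conjI ballI)
  show "{e. Inl e \<in> X} \<in> Ind" using X unfolding ext_indep_def by auto
  fix v assume v: "v \<in> V"
  have c: "card (X \<inter> PB v) \<le> 1" using X v unfolding PI_eq by auto
  have "Inl ` ({e. Inl e \<in> X} \<inter> \<delta> v) \<subseteq> X \<inter> PB v" unfolding PB_def by auto
  then have "card (Inl ` ({e. Inl e \<in> X} \<inter> \<delta> v) :: ('a + 'v) set) \<le> card (X \<inter> PB v)" by (rule card_mono[rotated]) simp
  moreover have "card (Inl ` ({e. Inl e \<in> X} \<inter> \<delta> v) :: ('a + 'v) set) = card ({e. Inl e \<in> X} \<inter> \<delta> v)"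
    by (rule card_image) simp
  ultimately show "card ({e. Inl e \<in> X} \<inter> \<delta> v) \<le> 1" using c by simp
qed

lemma Pts_le: assumes X: "X \<in> Pts" shows "wv \<bullet> incidence X \<le> real (card V) + real c0"
proof -
  have c1: "card X \<le> card V" using PI_card X by blast
  have "{e. Inl e \<in> X} \<in> Ind" using X unfolding ext_indep_def by auto
  then have c2: "card ({e. Inl e \<in> X} \<inter> C) \<le> c0" by (intro c0_ge) (use ind_sub in auto)
  show ?thesis using inner_inc[of X] base_le[of X] hh_sum[of X] c1 c2 by linarith
qed

lemma full_hit:
  assumes X: "X \<in> partition_indep E V \<delta>" and c: "card X = card V" and v: "v \<in> V"
  shows "X \<inter> PB v \<noteq> {}"
proof -
  have XG: "X \<subseteq> G" using X unfolding PI_eq by auto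
  have sub: "blk ` X \<subseteq> V" using blk_in XG by blast
  have cc: "card (blk ` X) = card V" using card_image[OF PI_inj[OF X]] c by simp
  have "blk ` X = V" by (rule card_subset_eq[OF finV sub cc])
  then have "v \<in> blk ` X" using v by simp
  then obtain x where x: "x \<in> X" "blk x = v" by (metis imageE)
  have "x \<in> G" using x XG by blast
  then have "x \<in> PB (blk x)" using blk_in by blast
  then show ?thesis using x by auto
qed

lemma Pts_eq:
  assumes X: "X \<in> Pts" and eq: "wv \<bullet> incidence X = real (card V) + real c0"
  shows "cert {e. Inl e \<in> X} \<and> card X = card V"
proof -
  define XA where "XA = {e. Inl e \<in> X}"
  have cisXA: "cis XA" unfolding XA_def by (rule Pts_cis[OF X])
  have XP: "X \<in> partition_indep E V \<delta>" using X by blast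
  have c1: "card X \<le> card V" using PI_card X by blast
  have "XA \<in> Ind" using cisXA cis_ind by blast
  then have "XA \<inter> C \<in> Ind" by (rule ind_sub) blast
  then have c2: "card (XA \<inter> C) \<le> c0" by (rule c0_ge) blast
  have r: "real (card {x\<in>X. \<not> allowed x}) \<le> 0" "real (card X) \<ge> real (card V)" "real (card (XA \<inter> C)) \<ge> real c0"
    using inner_inc[of X] base_le[of X] hh_sum[of X] c1 c2 eq unfolding XA_def by linarith+
  have cX: "card X = card V" using r(2) c1 by simp
  have cA: "card (XA \<inter> C) = c0" using r(3) c2 by simp
  have "card {x\<in>X. \<not> allowed x} = 0" using r(1) by simp
  then have al: "\<forall>x\<in>X. allowed x" by simp
  have S1: "\<forall>K. K \<in> Ind \<longrightarrow> K \<subseteq> C \<longrightarrow> card K \<le> card (XA \<inter> C)" using c0_ge cA by simp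
  have S2: "\<forall>v\<in>V. \<forall>e\<in>XA \<inter> \<delta> v. e \<in> C \<longrightarrow> e \<in> tp v \<and> tp v \<subseteq> C"
  proof (intro ballI impI)
    fix v e assume v: "v \<in> V" and e: "e \<in> XA \<inter> \<delta> v" and eC: "e \<in> C"
    have "allowed (Inl e)" using al e unfolding XA_def by auto
    then show "e \<in> tp v \<and> tp v \<subseteq> C" using v e eC unfolding allowed_def by auto
  qed
  have S3: "\<forall>v\<in>Sx XA. bet XA v \<subseteq> C"
  proof (intro ballI)
    fix v assume vS: "v \<in> Sx XA"
    have v: "v \<in> V" using vS unfolding Sx_def by auto
    show "bet XA v \<subseteq> C"
    proof (cases "XA \<inter> \<delta> v = {}")
      case True
      obtain x where x: "x \<in> X" "x \<in> PB v" using full_hit[OF XP cX v] by blast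
      have "x = Inr v"
      proof (cases x)
        case (Inl e)
        then have "e \<in> XA \<inter> \<delta> v" using x unfolding XA_def PB_def by auto
        then show ?thesis using True by blast
      next
        case (Inr w) then show ?thesis using x unfolding PB_def by auto
      qed
      then have "allowed (Inr v)" using al x by blast
      then have "{g \<in> \<delta> v. nl g} \<subseteq> C" unfolding allowed_def by simp
      then show ?thesis unfolding bet_def by blast
    next
      case False
      then obtain e where e: "e \<in> XA \<inter> \<delta> v" by blast
      have Xe: "XA \<inter> \<delta> v = {e}" using cis_single[OF cisXA v e] .
      have et: "e \<notin> tp v" using vS Xe unfolding Sx_def by auto
      have "allowed (Inl e)" using al e unfolding XA_def by auto
      then have "{g \<in> \<delta> v. nl g \<and> pref v g e} \<subseteq> C" using v e et unfolding allowed_def by auto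
      then show ?thesis unfolding bet_def using Xe by auto
    qed
  qed
  have "cert XA" unfolding cert_def using cisXA S1 S2 S3 by blast
  then show ?thesis using cX unfolding XA_def by simp
qed

lemma cert_Pts:
  assumes J: "cert J"
  defines "X \<equiv> Inl ` J \<union> Inr ` {v \<in> V. J \<inter> \<delta> v = {}}"
  shows "X \<in> Pts \<and> wv \<bullet> incidence X = real (card V) + real c0 \<and> {e. Inl e \<in> X} = J"
proof -
  have cJ: "cis J" and S2: "\<forall>v\<in>V. \<forall>e\<in>J \<inter> \<delta> v. e \<in> C \<longrightarrow> e \<in> tp v \<and> tp v \<subseteq> C"
    and S3: "\<forall>v\<in>Sx J. bet J v \<subseteq> C" using J unfolding cert_def by auto
  have JI: "J \<in> Ind" using cJ cis_ind by blast
  have JE: "J \<subseteq> E" using indE[OF JI] .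
  have XA: "{e. Inl e \<in> X} = J" unfolding X_def by auto
  have XG: "X \<subseteq> G" unfolding X_def ext_ground_def using JE by auto
  have blk1: "card (X \<inter> PB v) \<le> 1" if v: "v \<in> V" for v
  proof (cases "J \<inter> \<delta> v = {}")
    case True
    then have "X \<inter> PB v = {Inr v}" unfolding X_def PB_def using v by auto
    then show ?thesis by simp
  next
    case False
    then have "X \<inter> PB v = Inl ` (J \<inter> \<delta> v)" unfolding X_def PB_def by auto
    moreover have "card (Inl ` (J \<inter> \<delta> v) :: ('a + 'v) set) = card (J \<inter> \<delta> v)" by (rule card_image) simp
    ultimately show ?thesis using cJ v unfolding cis_def by simp
  qed
  have XP: "X \<in> partition_indep E V \<delta>" unfolding PI_eq using XG blk1 by auto
  have XM: "X \<in> ext_indep E V Ind" unfolding ext_indep_def using XG XA JI PI_card[OF XP] by auto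
  have cX: "card X = card V"
  proof -
    have "blk ` X = V"
    proof
      show "blk ` X \<subseteq> V" using blk_in XG by blast
      show "V \<subseteq> blk ` X"
      proof
        fix v assume v: "v \<in> V"
        show "v \<in> blk ` X"
        proof (cases "J \<inter> \<delta> v = {}")
          case True
          then have "Inr v \<in> X" unfolding X_def using v by auto
          moreover have "blk (Inr v) = v" unfolding blk_def by simp
          ultimately show ?thesis by force
        next
          case False
          then obtain e where e: "e \<in> J \<inter> \<delta> v" by blast
          then have "Inl e \<in> X" "Inl e \<in> PB v" unfolding X_def PB_def by auto
          then show ?thesis using blk_uniq[OF v] by force
        qed
      qed
    qed
    then show ?thesis using card_image[OF PI_inj[OF XP]] by simp
  qed
  have al: "\<forall>x\<in>X. allowed x"
  proof
    fix x assume x: "x \<in> X"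
    show "allowed x"
    proof (cases x)
      case (Inl e)
      then have eJ: "e \<in> J" using x unfolding X_def by auto
      have "(e \<in> C \<longrightarrow> e \<in> tp v \<and> tp v \<subseteq> C) \<and> (e \<notin> tp v \<longrightarrow> {g \<in> \<delta> v. nl g \<and> pref v g e} \<subseteq> C)"
        if v: "v \<in> V" "e \<in> \<delta> v" for v
      proof (rule conjI)
        show "e \<in> C \<longrightarrow> e \<in> tp v \<and> tp v \<subseteq> C" using S2 v eJ by blast
        show "e \<notin> tp v \<longrightarrow> {g \<in> \<delta> v. nl g \<and> pref v g e} \<subseteq> C"
        proof
        assume et: "e \<notin> tp v"
        have Je: "J \<inter> \<delta> v = {e}" using cis_single[OF cJ v(1)] eJ v by blast
        then have "v \<in> Sx J" using et v unfolding Sx_def by auto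
        then have "bet J v \<subseteq> C" using S3 by blast
        then show "{g \<in> \<delta> v. nl g \<and> pref v g e} \<subseteq> C" unfolding bet_def using Je by auto
        qed
      qed
      then show ?thesis using Inl unfolding allowed_def by simp
    next
      case (Inr v)
      then have v: "v \<in> V" "J \<inter> \<delta> v = {}" using x unfolding X_def by auto
      then have "v \<in> Sx J" unfolding Sx_def by auto
      then have "bet J v \<subseteq> C" using S3 by blast
      then show ?thesis using Inr v(2) unfolding allowed_def bet_def by auto
    qed
  qed
  have "wv \<bullet> incidence X = real (card V) + real c0"
    using inner_inc[of X] base_eq[OF al] hh_sum[of X] XA cert_c0[OF J] cX by simp
  then show ?thesis using XP XM XA by blast
qed

end

lemma proj_E_lin: "linear proj_E"
  by (rule linearI) (simp_all add: proj_E_def vec_eq_iff)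

lemma proj_inc: "proj_E (incidence X) = incidence {e. Inl e \<in> X}"
  by (simp add: proj_E_def incidence_def vec_eq_iff)

theorem theorem1p4:
  fixes E :: "('a::finite) set" and V :: "('v::finite) set"
    and \<delta> :: "'v \<Rightarrow> 'a set" and \<I> :: "'a set set"
    and pref :: "'v \<Rightarrow> 'a \<Rightarrow> 'a \<Rightarrow> bool"
  assumes "is_partition E V \<delta>"
    and "matroid E \<I>"
    and "\<forall>v\<in>V. weak_ranking (\<delta> v) (pref v)"
  shows "matroid (ext_ground E V) (partition_indep E V \<delta>)
    \<and> matroid (ext_ground E V) (ext_indep E V \<I>)
    \<and> (\<exists>F. F face_of
             (convex hull (incidence ` (partition_indep E V \<delta> \<inter> ext_indep E V \<I>)))
          \<and> proj_E ` F = convex hull (incidence ` {I. popular \<I> V \<delta> pref I}))"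
proof -
  have "popf E \<I> V \<delta> pref"
    unfolding popf_def popl_def popl_axioms_def mat_def using assms by auto
  then interpret popf E \<I> V \<delta> pref .
  let ?P = "partition_indep E V \<delta> \<inter> ext_indep E V \<I>"
  let ?S = "incidence ` ?P"
  have ex: "\<exists>F. F face_of (convex hull ?S) \<and> proj_E ` F = convex hull (incidence ` {I. popular \<I> V \<delta> pref I})"
  proof (cases "{I. popular \<I> V \<delta> pref I} = {}")
    case True
    show ?thesis by (rule exI[of _ "{}"]) (simp add: True)
  next
    case False
    define m where "m = real (card V) + real c0"
    define F where "F = convex hull ?S \<inter> {x. wv \<bullet> x = m}"
    define Pmax where "Pmax = {X \<in> ?P. wv \<bullet> incidence X = m}"
    have le: "\<And>x. x \<in> convex hull ?S \<Longrightarrow> wv \<bullet> x \<le> m"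
    proof -
      have "convex hull ?S \<subseteq> {x. wv \<bullet> x \<le> m}"
      proof (rule hull_minimal)
        show "?S \<subseteq> {x. wv \<bullet> x \<le> m}" using Pts_le unfolding m_def by auto
        show "convex {x. wv \<bullet> x \<le> m}" by (rule convex_halfspace_le)
      qed
      then show "\<And>x. x \<in> convex hull ?S \<Longrightarrow> wv \<bullet> x \<le> m" by blast
    qed
    have face: "F face_of convex hull ?S" unfolding F_def
      by (rule face_of_Int_supporting_hyperplane_le[OF convex_convex_hull le])
    have FP: "F = convex hull (incidence ` Pmax)"
    proof
      have "?P \<subseteq> Pow (ext_ground E V)" unfolding partition_indep_def by auto
      then have finP: "finite ?P" using finite_subset G_fin by blast
      have cpt: "compact ?S" by (rule finite_imp_compact[OF finite_imageI[OF finP]])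
      obtain S' where S': "S' \<subseteq> ?S" "F = convex hull S'" by (rule face_of_convex_hull_subset[OF cpt face])
      have S'P: "S' \<subseteq> incidence ` Pmax"
      proof
        fix s assume s: "s \<in> S'"
        have "s \<in> convex hull S'" using s by (rule hull_inc)
        then have "s \<in> F" using S'(2) by simp
        then have sm: "wv \<bullet> s = m" unfolding F_def by simp
        obtain X where X: "X \<in> ?P" "s = incidence X" using s S'(1) by blast
        have "X \<in> Pmax" unfolding Pmax_def using X sm by simp
        then show "s \<in> incidence ` Pmax" using X(2) by simp
      qed
      have "convex hull S' \<subseteq> convex hull (incidence ` Pmax)" by (rule hull_mono[OF S'P])
      then show "F \<subseteq> convex hull (incidence ` Pmax)" using S'(2) by simp
      have sub: "incidence ` Pmax \<subseteq> F"
      proof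
        fix s assume "s \<in> incidence ` Pmax"
        then obtain X where X: "X \<in> Pmax" "s = incidence X" by blast
        have XP: "X \<in> ?P" and Xm: "wv \<bullet> incidence X = m" using X(1) unfolding Pmax_def by auto
        have "incidence X \<in> ?S" using XP by simp
        then have "incidence X \<in> convex hull ?S" by (rule hull_inc)
        then show "s \<in> F" unfolding F_def using X(2) Xm by simp
      qed
      have cF: "convex F" unfolding F_def by (rule convex_Int[OF convex_convex_hull convex_hyperplane])
      show "convex hull (incidence ` Pmax) \<subseteq> F" by (rule hull_minimal[where S=convex, OF sub cF])
    qed
    have img: "(\<lambda>X. {e. Inl e \<in> X}) ` Pmax = {I. popular \<I> V \<delta> pref I}"
    proof
      show "(\<lambda>X. {e. Inl e \<in> X}) ` Pmax \<subseteq> {I. popular \<I> V \<delta> pref I}"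
      proof
        fix J assume "J \<in> (\<lambda>X. {e. Inl e \<in> X}) ` Pmax"
        then obtain X where X: "X \<in> Pmax" "J = {e. Inl e \<in> X}" by blast
        have "cert J" using Pts_eq[of X] X unfolding Pmax_def m_def by blast
        then show "J \<in> {I. popular \<I> V \<delta> pref I}" using pop_iff_cert by blast
      qed
      show "{I. popular \<I> V \<delta> pref I} \<subseteq> (\<lambda>X. {e. Inl e \<in> X}) ` Pmax"
      proof
        fix J assume "J \<in> {I. popular \<I> V \<delta> pref I}"
        then have J: "cert J" using pop_iff_cert by blast
        define X where "X = Inl ` J \<union> Inr ` {v \<in> V. J \<inter> \<delta> v = {}}"
        have "X \<in> ?P \<and> wv \<bullet> incidence X = m \<and> {e. Inl e \<in> X} = J"
          using cert_Pts[OF J] unfolding X_def m_def by blast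
        then show "J \<in> (\<lambda>X. {e. Inl e \<in> X}) ` Pmax" unfolding Pmax_def by force
      qed
    qed
    have "proj_E ` F = convex hull (proj_E ` incidence ` Pmax)"
      using convex_hull_linear_image[OF proj_E_lin] FP by simp
    also have "proj_E ` incidence ` Pmax = incidence ` ((\<lambda>X. {e. Inl e \<in> X}) ` Pmax)"
      by (auto simp: proj_inc image_image)
    also have "\<dots> = incidence ` {I. popular \<I> V \<delta> pref I}" using img by simp
    finally show ?thesis using face by blast
  qed
  show ?thesis using matroid_P matroid_M' ex by blast
qed


end
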